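(* Let $k$ be a field of characteristic $0$, $n\ge 2$, and let $v$ be a discrete valuation of $K_n=k((X_1,\ldots,X_n))$ over $k$ (in the sense of the context) with value group $\mathbb{Z}$. Then, by applying a finite number of monoidal transformations and changes of coordinates (and permutations of variables) to $X_1,\ldots,X_n$, one obtains new variables among which there is an element $Y_1$ with $\hat v(Y_1)=1$.
   Context: $R_n=k[[X_1,\ldots,X_n]]$, $M_n=(X_1,\ldots,X_n)$, $K_n$ its quotient field. A discrete valuation of $K_n\mid k$ is a rank-one discrete valuation trivial on $k$ with center $M_n$ in $R_n$. $\widehat K_n$ is the completion of $K_n$ with respect to $v$, $\hat v$ the extension of $v$, $R_{\hat v}$ its valuation ring with maximal ideal $\mathfrak m_{\hat v}$. Monoidal transformation: $k[[X_1,\ldots,X_n]]\to k[[Y_1,\ldots,Y_n]]$, $X_1\mapsto Y_1$, $X_2\mapsto Y_1Y_2$, $X_i\mapsto Y_i$ ($i\ge3$), used when $v(X_2)>v(X_1)$. Change of coordinates: $k[[X_1,\ldots,X_n]]\to L[[Y_1,\ldots,Y_n]]$, $X_1\mapsto Y_1$, $X_i\mapsto Y_i+c_iY_1$ ($i\ge 2$), where $c_i\in R_{\hat v}\setminus\mathfrak m_{\hat v}$ and $L$ is an extension field of $k$. In both cases the new variables $Y_i$ are regarded as elements of $R_{\hat v}\subset \widehat K_n$ (e.g. $Y_i=X_i-c_iX_1$), and transformations may be composed finitely many times. *)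

theory Defs
  imports Main "HOL-Library.Cardinality"
begin

text \<open>Formal power series in the variables indexed by a finite type 'n
  (so n = CARD('n)) with coefficients in 'k: functions from exponent vectors
  to coefficients.\<close>

type_synonym ('n, 'k) mps = "('n \<Rightarrow> nat) \<Rightarrow> 'k"

definition ps_zero :: "('n, 'k::comm_ring_1) mps" where
  "ps_zero = (\<lambda>\<alpha>. 0)"

definition ps_add :: "('n, 'k::comm_ring_1) mps \<Rightarrow> ('n, 'k) mps \<Rightarrow> ('n, 'k) mps" where
  "ps_add f g = (\<lambda>\<alpha>. f \<alpha> + g \<alpha>)"

definition ps_mult :: "('n::finite, 'k::comm_ring_1) mps \<Rightarrow> ('n, 'k) mps \<Rightarrow> ('n, 'k) mps" where
  "ps_mult f g = (\<lambda>\<alpha>. \<Sum>\<beta>\<in>{\<beta>. \<forall>i. \<beta> i \<le> \<alpha> i}. f \<beta> * g (\<lambda>i. \<alpha> i - \<beta> i))"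

definition ps_const :: "'k::comm_ring_1 \<Rightarrow> ('n, 'k) mps" where
  "ps_const c = (\<lambda>\<alpha>. if \<alpha> = (\<lambda>_. 0) then c else 0)"

definition ps_X :: "'n \<Rightarrow> ('n, 'k::comm_ring_1) mps" where
  "ps_X i = (\<lambda>\<alpha>. if \<alpha> = (\<lambda>j. if j = i then 1 else 0) then 1 else 0)"

definition ps_max_ideal :: "('n, 'k::comm_ring_1) mps set" where
  "ps_max_ideal = {f. f (\<lambda>_. 0) = 0}"

text \<open>Valuations on a field, written as integer-valued functions on the nonzero
  elements (the value at 0, meant to be infinity, is irrelevant).\<close>
definition valuation :: "('f::field \<Rightarrow> int) \<Rightarrow> bool" where
  "valuation w \<longleftrightarrow>
     (\<forall>x y. x \<noteq> 0 \<longrightarrow> y \<noteq> 0 \<longrightarrow> w (x * y) = w x + w y) \<and>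
     (\<forall>x y. x \<noteq> 0 \<longrightarrow> y \<noteq> 0 \<longrightarrow> x + y \<noteq> 0 \<longrightarrow> w (x + y) \<ge> min (w x) (w y))"

definition val_ring :: "('f::field \<Rightarrow> int) \<Rightarrow> 'f set" where
  "val_ring w = {x. x = 0 \<or> w x \<ge> 0}"

definition val_close :: "('f::field \<Rightarrow> int) \<Rightarrow> int \<Rightarrow> 'f \<Rightarrow> 'f \<Rightarrow> bool" where
  "val_close w N x y \<longleftrightarrow> x = y \<or> w (x - y) \<ge> N"

definition val_complete :: "('f::field \<Rightarrow> int) \<Rightarrow> bool" where
  "val_complete w \<longleftrightarrow>
     (\<forall>s :: nat \<Rightarrow> 'f. (\<forall>N. \<exists>M. \<forall>m\<ge>M. \<forall>n\<ge>M. val_close w N (s m) (s n)) \<longrightarrow>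
        (\<exists>x. \<forall>N. \<exists>M. \<forall>n\<ge>M. val_close w N (s n) x))"

definition val_dense :: "('f::field \<Rightarrow> int) \<Rightarrow> 'f set \<Rightarrow> bool" where
  "val_dense w A \<longleftrightarrow> (\<forall>x N. \<exists>a\<in>A. val_close w N x a)"

text \<open>Image of the quotient field K_n under an embedding of R_n.\<close>
definition frac_image :: "(('n, 'k::comm_ring_1) mps \<Rightarrow> 'f::field) \<Rightarrow> 'f set" where
  "frac_image \<iota> = {\<iota> f / \<iota> g | f g. g \<noteq> ps_zero}"

text \<open>An extension field L of k inside the valuation ring (coefficients of a
  change of coordinates are taken from such a field).\<close>
definition coeff_subfield ::
  "(('n, 'k::comm_ring_1) mps \<Rightarrow> 'f::field) \<Rightarrow> ('f \<Rightarrow> int) \<Rightarrow> 'f set \<Rightarrow> bool" where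
  "coeff_subfield \<iota> w L \<longleftrightarrow>
     0 \<in> L \<and> 1 \<in> L \<and>
     (\<forall>x\<in>L. \<forall>y\<in>L. x + y \<in> L \<and> x * y \<in> L \<and> - x \<in> L) \<and>
     (\<forall>x\<in>L. x \<noteq> 0 \<longrightarrow> inverse x \<in> L) \<and>
     range (\<lambda>c. \<iota> (ps_const c)) \<subseteq> L \<and> L \<subseteq> val_ring w"

text \<open>One elementary transformation of a system of variables (Y_i), regarded as
  elements of the completion: monoidal transformation, change of coordinates,
  or permutation of the variables.\<close>
inductive transf_step ::
  "(('n, 'k::comm_ring_1) mps \<Rightarrow> 'f::field) \<Rightarrow> ('f \<Rightarrow> int) \<Rightarrow> ('n \<Rightarrow> 'f) \<Rightarrow> ('n \<Rightarrow> 'f) \<Rightarrow> bool"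
  for \<iota> w where
  monoidal: "i \<noteq> j \<Longrightarrow> Y i \<noteq> 0 \<Longrightarrow> Y j \<noteq> 0 \<Longrightarrow> w (Y j) > w (Y i) \<Longrightarrow>
     transf_step \<iota> w Y (Y(j := Y j / Y i))"
| coord_change: "coeff_subfield \<iota> w L \<Longrightarrow>
     (\<forall>j. j \<noteq> i \<longrightarrow> c j \<in> L \<and> c j \<noteq> 0 \<and> w (c j) = 0) \<Longrightarrow>
     transf_step \<iota> w Y (\<lambda>j. if j = i then Y i else Y j - c j * Y i)"
| permute: "bij \<sigma> \<Longrightarrow> transf_step \<iota> w Y (Y \<circ> \<sigma>)"

end

theory Submission
  imports Defs "HOL-Computational_Algebra.Polynomial" "HOL-Library.FuncSet"
begin

definition vge :: "('f::field \<Rightarrow> int) \<Rightarrow> int \<Rightarrow> 'f \<Rightarrow> bool" where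
  "vge w s x \<longleftrightarrow> x = 0 \<or> s \<le> w x"

locale vfield =
  fixes w :: "'f::field \<Rightarrow> int"
  assumes val: "valuation w"
begin

lemma wmult: "x \<noteq> 0 \<Longrightarrow> y \<noteq> 0 \<Longrightarrow> w (x * y) = w x + w y"
  using val unfolding valuation_def by blast

lemma wadd: "x \<noteq> 0 \<Longrightarrow> y \<noteq> 0 \<Longrightarrow> x + y \<noteq> 0 \<Longrightarrow> w (x + y) \<ge> min (w x) (w y)"
  using val unfolding valuation_def by blast

lemma w1: "w 1 = 0"
  using wmult[of 1 1] by simp

lemma wm1: "w (-1) = 0"
proof -
  have "w ((-1) * (-1)) = w (-1) + w (-1)" by (rule wmult) auto
  then show ?thesis using w1 by simp
qed

lemma wuminus: "x \<noteq> 0 \<Longrightarrow> w (- x) = w x"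
  using wmult[of "-1" x] wm1 by simp

lemma winverse: "x \<noteq> 0 \<Longrightarrow> w (inverse x) = - w x"
  using wmult[of x "inverse x"] w1 by simp

lemma wdivide: "x \<noteq> 0 \<Longrightarrow> y \<noteq> 0 \<Longrightarrow> w (x / y) = w x - w y"
  using wmult[of x "inverse y"] winverse[of y] by (simp add: divide_inverse)

lemma wpower: "x \<noteq> 0 \<Longrightarrow> w (x ^ n) = int n * w x"
  by (induction n) (auto simp: w1 wmult algebra_simps)

lemma vge_zero[simp]: "vge w s 0" by (simp add: vge_def)

lemma vge_mono: "vge w s x \<Longrightarrow> r \<le> s \<Longrightarrow> vge w r x"
  by (auto simp: vge_def)

lemma vge_add: "vge w s a \<Longrightarrow> vge w s b \<Longrightarrow> vge w s (a + b)"
  unfolding vge_def using wadd[of a b] by force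

lemma vge_uminus: "vge w s a \<Longrightarrow> vge w s (- a)"
  unfolding vge_def using wuminus[of a] by (cases "a = 0") auto

lemma vge_diff: "vge w s a \<Longrightarrow> vge w s b \<Longrightarrow> vge w s (a - b)"
  using vge_add[of s a "-b"] vge_uminus[of s b] by simp

lemma vge_mult: "vge w s a \<Longrightarrow> vge w t b \<Longrightarrow> vge w (s + t) (a * b)"
  unfolding vge_def using wmult[of a b] by (cases "a = 0"; cases "b = 0") auto

lemma vge_sum: "(\<And>i. i \<in> S \<Longrightarrow> vge w s (f i)) \<Longrightarrow> vge w s (\<Sum>i\<in>S. f i)"
  by (induction S rule: infinite_finite_induct) (auto intro: vge_add)

lemma vge_strict:
  assumes "a \<noteq> 0" "vge w (w a + 1) b" shows "a + b \<noteq> 0 \<and> w (a + b) = w a"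
proof -
  have ab: "a + b \<noteq> 0"
  proof
    assume "a + b = 0" then have "b = - a" by (simp add: add.commute eq_neg_iff_add_eq_0)
    then show False using assms wuminus[of a] by (auto simp: vge_def)
  qed
  have "vge w (w a) b" using assms(2) vge_mono by force
  then have "vge w (w a) (a + b)" using vge_add[of "w a" a b] by (simp add: vge_def)
  then have ge: "w (a + b) \<ge> w a" using ab by (simp add: vge_def)
  have "vge w (w a + 1) (a + b) \<Longrightarrow> False"
  proof -
    assume h: "vge w (w a + 1) (a + b)"
    have "vge w (w a + 1) ((a + b) - b)" by (rule vge_diff[OF h assms(2)])
    then show False using assms(1) by (simp add: vge_def)
  qed
  then have "w (a + b) \<le> w a" using ab by (force simp: vge_def)
  with ge ab show ?thesis by simp
qed

lemma vge_close:
  assumes "z \<noteq> 0" "vge w (w z + 1) (z - p)" shows "p \<noteq> 0 \<and> w p = w z"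
  using vge_strict[OF assms(1), of "p - z"] assms(2) vge_uminus[of _ "z - p"] by simp

end


definition ufield :: "('f::field \<Rightarrow> int) \<Rightarrow> 'f set \<Rightarrow> bool" where
  "ufield w L \<longleftrightarrow> 0 \<in> L \<and> 1 \<in> L \<and>
     (\<forall>x\<in>L. \<forall>y\<in>L. x + y \<in> L \<and> x * y \<in> L \<and> - x \<in> L) \<and>
     (\<forall>x\<in>L. x \<noteq> 0 \<longrightarrow> inverse x \<in> L) \<and> L \<subseteq> val_ring w"

definition Lpoly :: "'f::field set \<Rightarrow> 'f poly set" where
  "Lpoly L = {p. \<forall>n. coeff p n \<in> L}"

context vfield
begin

lemma val_ring_vge: "x \<in> val_ring w \<longleftrightarrow> vge w 0 x"
  by (auto simp: val_ring_def vge_def)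

lemma ufield_simps:
  assumes "ufield w L"
  shows "0 \<in> L" "1 \<in> L" "x \<in> L \<Longrightarrow> y \<in> L \<Longrightarrow> x + y \<in> L"
    "x \<in> L \<Longrightarrow> y \<in> L \<Longrightarrow> x * y \<in> L" "x \<in> L \<Longrightarrow> - x \<in> L"
    "x \<in> L \<Longrightarrow> x \<noteq> 0 \<Longrightarrow> inverse x \<in> L" "x \<in> L \<Longrightarrow> vge w 0 x"
  using assms unfolding ufield_def by (auto simp: val_ring_vge[symmetric])

lemma ufield_diff: "ufield w L \<Longrightarrow> x \<in> L \<Longrightarrow> y \<in> L \<Longrightarrow> x - y \<in> L"
  using ufield_simps(3,5) by (metis diff_conv_add_uminus)

lemma ufield_divide: "ufield w L \<Longrightarrow> x \<in> L \<Longrightarrow> y \<in> L \<Longrightarrow> x / y \<in> L"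
  using ufield_simps(1,4,6) by (cases "y = 0") (auto simp: divide_inverse)

lemma ufield_of_nat: "ufield w L \<Longrightarrow> of_nat n \<in> L"
  by (induction n) (auto intro: ufield_simps)

lemma ufield_sum: "ufield w L \<Longrightarrow> (\<And>i. i \<in> S \<Longrightarrow> f i \<in> L) \<Longrightarrow> (\<Sum>i\<in>S. f i) \<in> L"
  by (induction S rule: infinite_finite_induct) (auto intro: ufield_simps)

lemma ufield_w0: "ufield w L \<Longrightarrow> x \<in> L \<Longrightarrow> x \<noteq> 0 \<Longrightarrow> w x = 0"
proof -
  assume a: "ufield w L" "x \<in> L" "x \<noteq> 0"
  then have "inverse x \<in> L" by (rule ufield_simps(6))
  then have "vge w 0 (inverse x)" by (rule ufield_simps(7)[OF a(1)])
  moreover have "vge w 0 x" by (rule ufield_simps(7)[OF a(1,2)])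
  ultimately show ?thesis using a(3) winverse[of x] by (auto simp: vge_def)
qed

lemma ufield_power: "ufield w L \<Longrightarrow> x \<in> L \<Longrightarrow> x ^ n \<in> L"
  by (induction n) (auto intro: ufield_simps)

lemma vring_ufield: "vge w 0 x \<Longrightarrow> vge w 0 y \<Longrightarrow> vge w 0 (x + y) \<and> vge w 0 (x * y) \<and> vge w 0 (- x)"
  using vge_add vge_mult[of 0 x 0 y] vge_uminus by auto

lemma vge_one: "vge w 0 1"
  by (simp add: vge_def w1)

lemma vge_of_nat: "vge w 0 (of_nat n)"
proof (induction n)
  case (Suc n) then show ?case using vge_add[OF vge_one Suc] by simp
qed simp


lemma Lpoly_add: "(\<And>x y. x \<in> L \<Longrightarrow> y \<in> L \<Longrightarrow> x + y \<in> L) \<Longrightarrow> p \<in> Lpoly L \<Longrightarrow> q \<in> Lpoly L \<Longrightarrow> p + q \<in> Lpoly L"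
  by (auto simp: Lpoly_def)

lemma ufield_Lpoly:
  assumes L: "ufield w L"
  shows "0 \<in> Lpoly L" "1 \<in> Lpoly L"
    "p \<in> Lpoly L \<Longrightarrow> q \<in> Lpoly L \<Longrightarrow> p + q \<in> Lpoly L"
    "p \<in> Lpoly L \<Longrightarrow> - p \<in> Lpoly L"
    "p \<in> Lpoly L \<Longrightarrow> q \<in> Lpoly L \<Longrightarrow> p - q \<in> Lpoly L"
    "p \<in> Lpoly L \<Longrightarrow> q \<in> Lpoly L \<Longrightarrow> p * q \<in> Lpoly L"
    "a \<in> L \<Longrightarrow> p \<in> Lpoly L \<Longrightarrow> smult a p \<in> Lpoly L"
    "a \<in> L \<Longrightarrow> monom a n \<in> Lpoly L"
    "a \<in> L \<Longrightarrow> [:a:] \<in> Lpoly L"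
    "a \<in> L \<Longrightarrow> p \<in> Lpoly L \<Longrightarrow> pCons a p \<in> Lpoly L"
    "p \<in> Lpoly L \<Longrightarrow> pderiv p \<in> Lpoly L"
    "p \<in> Lpoly L \<Longrightarrow> coeff p n \<in> L"
proof -
  note U = ufield_simps[OF L]
  show "0 \<in> Lpoly L" using U(1) by (simp add: Lpoly_def)
  show "1 \<in> Lpoly L" using U(1,2) by (simp add: Lpoly_def coeff_1)
  show "p \<in> Lpoly L \<Longrightarrow> q \<in> Lpoly L \<Longrightarrow> p + q \<in> Lpoly L" using U(3) by (simp add: Lpoly_def)
  show "p \<in> Lpoly L \<Longrightarrow> - p \<in> Lpoly L" using U(5) by (simp add: Lpoly_def)
  show "p \<in> Lpoly L \<Longrightarrow> q \<in> Lpoly L \<Longrightarrow> p - q \<in> Lpoly L" using ufield_diff[OF L] by (simp add: Lpoly_def)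
  show "p * q \<in> Lpoly L" if "p \<in> Lpoly L" "q \<in> Lpoly L"
  proof -
    have "coeff (p * q) n \<in> L" for n
      unfolding coeff_mult using that by (intro ufield_sum[OF L] U(4)) (auto simp: Lpoly_def)
    then show ?thesis by (simp add: Lpoly_def)
  qed
  show "a \<in> L \<Longrightarrow> p \<in> Lpoly L \<Longrightarrow> smult a p \<in> Lpoly L" using U(4) by (simp add: Lpoly_def)
  show "a \<in> L \<Longrightarrow> monom a n \<in> Lpoly L" using U(1) by (simp add: Lpoly_def)
  show "a \<in> L \<Longrightarrow> [:a:] \<in> Lpoly L" using U(1) by (simp add: Lpoly_def coeff_pCons split: nat.splits)
  show "a \<in> L \<Longrightarrow> p \<in> Lpoly L \<Longrightarrow> pCons a p \<in> Lpoly L" by (simp add: Lpoly_def coeff_pCons split: nat.splits)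
  show "p \<in> Lpoly L \<Longrightarrow> pderiv p \<in> Lpoly L"
    using U(4) ufield_of_nat[OF L] by (simp add: Lpoly_def coeff_pderiv del: of_nat_Suc)
  show "p \<in> Lpoly L \<Longrightarrow> coeff p n \<in> L" by (simp add: Lpoly_def)
qed

definition Vpoly :: "'f poly set" where "Vpoly = {p. \<forall>n. vge w 0 (coeff p n)}"

lemma Lpoly_Vpoly: "ufield w L \<Longrightarrow> p \<in> Lpoly L \<Longrightarrow> p \<in> Vpoly"
  unfolding Lpoly_def Vpoly_def mem_Collect_eq by (blast intro: ufield_simps(7))

lemma Vpoly_pCons: "pCons a p \<in> Vpoly \<Longrightarrow> vge w 0 a \<and> p \<in> Vpoly"
proof -
  assume a: "pCons a p \<in> Vpoly"
  have "vge w 0 (coeff (pCons a p) 0)" "vge w 0 (coeff (pCons a p) (Suc n))" for n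
    using a unfolding Vpoly_def mem_Collect_eq by blast+
  then show ?thesis unfolding Vpoly_def by simp
qed

lemma Vpoly_pderiv: "p \<in> Vpoly \<Longrightarrow> pderiv p \<in> Vpoly"
proof -
  assume p: "p \<in> Vpoly"
  have "vge w 0 (of_nat (Suc n) * coeff p (Suc n))" for n
    using vge_mult[OF vge_of_nat, of 0 "coeff p (Suc n)" "Suc n"] p by (simp add: Vpoly_def)
  then show ?thesis by (simp add: Vpoly_def coeff_pderiv)
qed

lemma poly_vge0: "p \<in> Vpoly \<Longrightarrow> vge w 0 x \<Longrightarrow> vge w 0 (poly p x)"
proof (induction p)
  case 0 then show ?case by simp
next
  case (pCons a p)
  then have "vge w 0 a" "vge w 0 (poly p x)" using Vpoly_pCons[of a p] by auto
  then have "vge w 0 (a + x * poly p x)" using vge_add vge_mult[OF pCons.prems(2), of 0] by fastforce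
  then show ?case by simp
qed

lemma taylor1:
  "p \<in> Vpoly \<Longrightarrow> vge w 0 x \<Longrightarrow> vge w 0 h \<Longrightarrow>
   \<exists>D. vge w 0 D \<and> poly p (x + h) = poly p x + h * D"
proof (induction p)
  case 0 then show ?case by (intro exI[of _ 0]) simp
next
  case (pCons a q)
  then have a: "vge w 0 a" and q: "q \<in> Vpoly" using Vpoly_pCons by auto
  obtain D where D: "vge w 0 D" "poly q (x + h) = poly q x + h * D" using pCons q by blast
  let ?D = "poly q x + (x + h) * D"
  have "vge w (0 + 0) ((x + h) * D)" using vge_mult[OF vge_add[OF pCons.prems(2,3)] D(1)] .
  then have "vge w 0 ?D" using poly_vge0[OF q pCons.prems(2)] vge_add by simp
  moreover have "poly (pCons a q) (x + h) = poly (pCons a q) x + h * ?D"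
    using D(2) by (simp add: algebra_simps)
  ultimately show ?case by blast
qed

lemma taylor2:
  "p \<in> Vpoly \<Longrightarrow> vge w 0 x \<Longrightarrow> vge w 0 h \<Longrightarrow>
   \<exists>S. vge w 0 S \<and> poly p (x + h) = poly p x + h * poly (pderiv p) x + h^2 * S"
proof (induction p)
  case 0 then show ?case by (intro exI[of _ 0]) simp
next
  case (pCons a q)
  then have a: "vge w 0 a" and q: "q \<in> Vpoly" using Vpoly_pCons by auto
  obtain S where S: "vge w 0 S" "poly q (x + h) = poly q x + h * poly (pderiv q) x + h^2 * S"
    using pCons q by blast
  let ?S = "x * S + poly (pderiv q) x + h * S"
  have "vge w 0 (poly (pderiv q) x)" using poly_vge0[OF Vpoly_pderiv[OF q] pCons.prems(2)] .
  moreover have "vge w (0 + 0) (x * S)" using vge_mult[OF pCons.prems(2) S(1)] .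
  moreover have "vge w (0 + 0) (h * S)" using vge_mult[OF pCons.prems(3) S(1)] .
  ultimately have "vge w 0 ?S" using vge_add by simp
  moreover have "poly (pCons a q) (x + h) = poly (pCons a q) x + h * poly (pderiv (pCons a q)) x + h^2 * ?S"
    using S(2) by (simp add: pderiv_pCons algebra_simps power2_eq_square)
  ultimately show ?case by blast
qed

lemma vge_close_iff: "val_close w (int N) x y \<Longrightarrow> vge w (int N) (x - y)"
  by (auto simp: val_close_def vge_def)

lemma hensel:
  assumes complete: "val_complete w"
    and p: "p \<in> Vpoly" and u: "vge w 0 u" and pu: "vge w 1 (poly p u)"
    and du: "poly (pderiv p) u \<noteq> 0" "w (poly (pderiv p) u) = 0"
  shows "\<exists>c. vge w 1 (c - u) \<and> poly p c = 0"
proof -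
  define N where "N x = x - poly p x / poly (pderiv p) x" for x
  define xs where "xs k = (N ^^ k) u" for k
  have xs0: "xs 0 = u" and xsS: "xs (Suc k) = N (xs k)" for k by (simp_all add: xs_def)
  have dp: "pderiv p \<in> Vpoly" using Vpoly_pderiv[OF p] .
  have inv: "vge w 0 (xs k) \<and> vge w 1 (xs k - u) \<and> poly (pderiv p) (xs k) \<noteq> 0 \<and>
      w (poly (pderiv p) (xs k)) = 0 \<and> vge w (int k + 1) (poly p (xs k)) \<and>
      vge w (int k + 1) (xs (Suc k) - xs k)" for k
  proof (induction k)
    case 0
    have "vge w 1 (N u - u)"
    proof (cases "poly p u = 0")
      case True then show ?thesis by (simp add: N_def)
    next
      case False
      then show ?thesis using pu du by (simp add: N_def vge_def wdivide wuminus)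
    qed
    then show ?case using u pu du by (simp add: xs0 xsS)
  next
    case (Suc k)
    let ?x = "xs k"
    define h where "h = - (poly p ?x / poly (pderiv p) ?x)"
    have x0: "vge w 0 ?x" and xu: "vge w 1 (?x - u)" and d0: "poly (pderiv p) ?x \<noteq> 0"
      and dw: "w (poly (pderiv p) ?x) = 0" and px: "vge w (int k + 1) (poly p ?x)"
      using Suc by auto
    have hk: "vge w (int k + 1) h"
    proof (cases "poly p ?x = 0")
      case True then show ?thesis by (simp add: h_def)
    next
      case False then show ?thesis using px d0 dw by (simp add: h_def vge_def wdivide wuminus)
    qed
    have h0: "vge w 0 h" using vge_mono[OF hk] by simp
    have xS: "xs (Suc k) = ?x + h" by (simp add: xsS N_def h_def)
    obtain S where S: "vge w 0 S" "poly p (?x + h) = poly p ?x + h * poly (pderiv p) ?x + h^2 * S"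
      using taylor2[OF p x0 h0] by blast
    have "poly p ?x + h * poly (pderiv p) ?x = 0" using d0 by (simp add: h_def)
    then have pS: "poly p (xs (Suc k)) = h^2 * S" using S(2) xS by simp
    have "vge w ((int k + 1) + (int k + 1)) (h * h)" by (rule vge_mult[OF hk hk])
    then have "vge w ((int k + 1) + (int k + 1) + 0) (h * h * S)" by (rule vge_mult[OF _ S(1)])
    then have pS': "vge w (int (Suc k) + 1) (poly p (xs (Suc k)))"
      using pS by (auto simp: power2_eq_square intro: vge_mono)
    obtain D where D: "vge w 0 D" "poly (pderiv p) (?x + h) = poly (pderiv p) ?x + h * D"
      using taylor1[OF dp x0 h0] by blast
    have "vge w (int k + 1 + 0) (h * D)" by (rule vge_mult[OF hk D(1)])
    then have "vge w (w (poly (pderiv p) ?x) + 1) (h * D)" using dw by (auto intro: vge_mono)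
    from vge_strict[OF d0 this] D(2) xS
    have dS: "poly (pderiv p) (xs (Suc k)) \<noteq> 0 \<and> w (poly (pderiv p) (xs (Suc k))) = 0"
      using dw by simp
    have x0S: "vge w 0 (xs (Suc k))" using xS x0 h0 vge_add by simp
    have "vge w 1 (?x - u + h)" using vge_add[OF xu vge_mono[OF hk]] by simp
    then have xuS: "vge w 1 (xs (Suc k) - u)" using xS by (simp add: algebra_simps)
    define h2 where "h2 = - (poly p (xs (Suc k)) / poly (pderiv p) (xs (Suc k)))"
    have "vge w (int (Suc k) + 1) h2"
    proof (cases "poly p (xs (Suc k)) = 0")
      case True then show ?thesis by (simp add: h2_def)
    next
      case False then show ?thesis using pS' dS by (simp add: h2_def vge_def wdivide wuminus)
    qed
    moreover have "xs (Suc (Suc k)) - xs (Suc k) = h2" by (simp add: xsS[of "Suc k"] N_def h2_def)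
    ultimately show ?case using pS' dS x0S xuS by simp
  qed
  have cauchy: "vge w (int n + 1) (xs m - xs n)" if "n \<le> m" for m n
    using that
  proof (induction m)
    case 0 then show ?case by simp
  next
    case (Suc m)
    show ?case
    proof (cases "n = Suc m")
      case True then show ?thesis by simp
    next
      case False
      then have "n \<le> m" using Suc by simp
      then have a: "vge w (int n + 1) (xs m - xs n)" using Suc by simp
      have "vge w (int n + 1) (xs (Suc m) - xs m)" using inv[of m] \<open>n \<le> m\<close> vge_mono by force
      from vge_add[OF this a] show ?thesis by simp
    qed
  qed
  have "\<exists>M. \<forall>m\<ge>M. \<forall>n\<ge>M. val_close w Nn (xs m) (xs n)" for Nn
  proof (intro exI[of _ "nat Nn"] allI impI)
    fix m n assume "nat Nn \<le> m" "nat Nn \<le> n"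
    show "val_close w Nn (xs m) (xs n)"
    proof (cases "n \<le> m")
      case True
      then have "vge w (int n + 1) (xs m - xs n)" by (rule cauchy)
      then show ?thesis using \<open>nat Nn \<le> n\<close> by (auto simp: vge_def val_close_def)
    next
      case False
      then have "vge w (int m + 1) (xs n - xs m)" by (intro cauchy) simp
      then have "vge w (int m + 1) (- (xs m - xs n))" by simp
      then have "vge w (int m + 1) (xs m - xs n)" using vge_uminus by fastforce
      then show ?thesis using \<open>nat Nn \<le> m\<close> by (auto simp: vge_def val_close_def)
    qed
  qed
  then obtain c where c: "\<And>Nn. \<exists>M. \<forall>n\<ge>M. val_close w Nn (xs n) c"
    using complete unfolding val_complete_def by blast
  have approx: "\<exists>n\<ge>K. vge w (int K) (c - xs n)" for K
  proof -
    obtain M where "\<forall>n\<ge>M. val_close w (int K) (xs n) c" using c by blast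
    then have "val_close w (int K) (xs (max M K)) c" by simp
    then have "vge w (int K) (xs (max M K) - c)" by (auto simp: val_close_def vge_def)
    then have "vge w (int K) (c - xs (max M K))" using vge_uminus by fastforce
    then show ?thesis by (intro exI[of _ "max M K"]) simp
  qed
  obtain n1 where n1: "vge w 1 (c - xs n1)" using approx[of 1] by auto
  have c0: "vge w 0 c"
  proof -
    have a: "vge w 0 (xs n1)" using inv[of n1] by blast
    have b: "vge w 0 (c - xs n1)" using vge_mono[OF n1] by simp
    have "vge w 0 (xs n1 + (c - xs n1))" by (rule vge_add[OF a b])
    then show ?thesis by simp
  qed
  have "vge w 1 ((c - xs n1) + (xs n1 - u))" using vge_add[OF n1] inv[of n1] by blast
  then have cu: "vge w 1 (c - u)" by simp
  have pc: "poly p c = 0"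
  proof (rule ccontr)
    assume ne: "poly p c \<noteq> 0"
    define K where "K = nat (w (poly p c) + 1)"
    obtain n where n: "n \<ge> K" "vge w (int K) (c - xs n)" using approx by blast
    have xn: "vge w 0 (xs n)" using inv by blast
    have hn: "vge w 0 (c - xs n)" using vge_mono[OF n(2)] by simp
    obtain D where D: "vge w 0 D" "poly p (xs n + (c - xs n)) = poly p (xs n) + (c - xs n) * D"
      using taylor1[OF p xn hn] by blast
    have "vge w (int K + 0) ((c - xs n) * D)" by (rule vge_mult[OF n(2) D(1)])
    moreover have "vge w (int K) (poly p (xs n))" using inv[of n] n(1) vge_mono by force
    ultimately have "vge w (int K) (poly p c)" using D(2) vge_add by fastforce
    then show False using ne by (simp add: vge_def K_def split: if_splits)
  qed
  show ?thesis using cu pc by blast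
qed

end


context vfield
begin

lemma degree_less_aux:
  fixes x :: "'a::zero poly"
  assumes "degree x \<le> n" "coeff x n = 0" "0 < n" shows "degree x < n"
proof (rule ccontr)
  assume "\<not> degree x < n"
  then have "degree x = n" using assms(1) by simp
  then have "x = 0" using assms(2) leading_coeff_0_iff by metis
  then show False using \<open>degree x = n\<close> assms(3) by simp
qed

lemma Ldiv:
  assumes L: "ufield w L" and b: "b \<in> Lpoly L" "b \<noteq> 0"
  shows "a \<in> Lpoly L \<Longrightarrow> \<exists>q r. q \<in> Lpoly L \<and> r \<in> Lpoly L \<and> a = q * b + r \<and> (r = 0 \<or> degree r < degree b)"
proof (induction "degree a" arbitrary: a rule: less_induct)
  case less
  note U = ufield_Lpoly[OF L]
  show ?case
  proof (cases "degree b = 0")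
    case True
    then obtain b0 where b0: "b = [:b0:]" by (metis degree_eq_zeroE)
    then have "b0 \<noteq> 0" "b0 \<in> L" using b U(12)[of b 0] by auto
    then have "inverse b0 \<in> L" using ufield_simps(6)[OF L] by blast
    have "a = smult (inverse b0) a * b + 0" using \<open>b0 \<noteq> 0\<close> by (simp add: b0)
    then show ?thesis using U(1) U(7)[OF \<open>inverse b0 \<in> L\<close> less.prems] by blast
  next
    case False
    show ?thesis
    proof (cases "degree a < degree b")
      case True
      then show ?thesis using less.prems U(1) by (intro exI[of _ 0] exI[of _ a]) simp
    next
      case False2: False
      define cc where "cc = lead_coeff a / lead_coeff b"
      define m where "m = monom cc (degree a - degree b)"
      define a' where "a' = a - m * b"
      have ccL: "cc \<in> L" unfolding cc_def using ufield_divide[OF L] U(12) less.prems b by blast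
      have mL: "m \<in> Lpoly L" unfolding m_def using U(8)[OF ccL] .
      have a'L: "a' \<in> Lpoly L" unfolding a'_def using U(5)[OF less.prems U(6)[OF mL b(1)]] .
      have lb: "lead_coeff b \<noteq> 0" using b by simp
      have "coeff (m * b) (degree a) = cc * coeff b (degree a - (degree a - degree b))"
        unfolding m_def coeff_monom_mult by simp
      also have "\<dots> = lead_coeff a" using False2 lb by (simp add: cc_def)
      finally have c1: "coeff a' (degree a) = 0" by (simp add: a'_def)
      have "degree (m * b) \<le> degree a"
        using degree_mult_le[of m b] degree_monom_le[of cc "degree a - degree b"] False2
        unfolding m_def by simp
      then have "degree a' \<le> degree a" unfolding a'_def by (simp add: degree_diff_le)
      then have "degree a' < degree a" using degree_less_aux[OF _ c1] False False2 by simp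
      then obtain q r where qr: "q \<in> Lpoly L" "r \<in> Lpoly L" "a' = q * b + r" "r = 0 \<or> degree r < degree b"
        using less.hyps a'L by blast
      have "a = (q + m) * b + r" using qr(3) by (simp add: a'_def algebra_simps)
      then show ?thesis using U(3)[OF qr(1) mL] qr by blast
    qed
  qed
qed

lemma ext_field:
  assumes complete: "val_complete w"
    and char: "\<And>n. n > 0 \<Longrightarrow> of_nat n \<noteq> (0::'f)"
    and L: "ufield w L" and u: "u \<noteq> 0" "w u = 0"
  shows "\<exists>L'. ufield w L' \<and> L \<subseteq> L' \<and> (\<exists>c\<in>L'. vge w 1 (u - c))"
proof -
  note U = ufield_Lpoly[OF L]
  note US = ufield_simps[OF L]
  define Bad where "Bad = {p \<in> Lpoly L. p \<noteq> 0 \<and> vge w 1 (poly p u)}"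
  have u0: "vge w 0 u" using u by (simp add: vge_def)
  have pv: "vge w 0 (poly q u)" if "q \<in> Lpoly L" for q
    using poly_vge0[OF Lpoly_Vpoly[OF L that] u0] .
  have X: "[:0, 1:] \<in> Lpoly L" using U(10)[OF US(1) U(9)[OF US(2)]] .
  show ?thesis
  proof (cases "Bad = {}")
    case True
    have G: "poly q u \<noteq> 0 \<and> w (poly q u) = 0" if "q \<in> Lpoly L" "q \<noteq> 0" for q
    proof -
      have "q \<notin> Bad" using True by blast
      then have "\<not> vge w 1 (poly q u)" using that by (simp add: Bad_def)
      then show ?thesis using pv[OF that(1)] by (simp add: vge_def)
    qed
    define L' where "L' = {poly a u / poly b u | a b. a \<in> Lpoly L \<and> b \<in> Lpoly L \<and> b \<noteq> 0}"
    have inL': "poly a u / poly b u \<in> L'" if "a \<in> Lpoly L" "b \<in> Lpoly L" "b \<noteq> 0" for a b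
      using that unfolding L'_def by blast
    have "ufield w L'"
      unfolding ufield_def
    proof (intro conjI ballI impI)
      show "0 \<in> L'" using inL'[OF U(1) U(2)] by simp
      show "1 \<in> L'" using inL'[OF U(2) U(2)] G[OF U(2)] by simp
      fix x assume "x \<in> L'"
      then obtain a1 b1 where x: "x = poly a1 u / poly b1 u" "a1 \<in> Lpoly L" "b1 \<in> Lpoly L" "b1 \<noteq> 0"
        unfolding L'_def by blast
      have nb1: "poly b1 u \<noteq> 0" using G x by blast
      {
        fix y assume "y \<in> L'"
        then obtain a2 b2 where y: "y = poly a2 u / poly b2 u" "a2 \<in> Lpoly L" "b2 \<in> Lpoly L" "b2 \<noteq> 0"
          unfolding L'_def by blast
        have nb2: "poly b2 u \<noteq> 0" using G y by blast
        have "poly a1 u / poly b1 u + poly a2 u / poly b2 u = poly (a1 * b2 + a2 * b1) u / poly (b1 * b2) u"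
          using nb1 nb2 by (simp add: field_simps)
        then have eq: "x + y = poly (a1 * b2 + a2 * b1) u / poly (b1 * b2) u"
          using x(1) y(1) by simp
        have m: "poly (a1 * b2 + a2 * b1) u / poly (b1 * b2) u \<in> L'"
          using x y by (intro inL' U(3) U(6)) auto
        show "x + y \<in> L'" unfolding eq by (rule m)
        have eq2: "x * y = poly (a1 * a2) u / poly (b1 * b2) u"
          using x(1) y(1) by simp
        have m2: "poly (a1 * a2) u / poly (b1 * b2) u \<in> L'"
          using x y by (intro inL' U(6)) auto
        show "x * y \<in> L'" unfolding eq2 by (rule m2)
      }
      have eq3: "- x = poly (- a1) u / poly b1 u" using x by simp
      have m3: "poly (- a1) u / poly b1 u \<in> L'" using x by (intro inL' U(4)) auto
      show "- x \<in> L'" unfolding eq3 by (rule m3)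
      {
        assume "x \<noteq> 0"
        then have "a1 \<noteq> 0" using x by auto
        have "inverse x = poly b1 u / poly a1 u" using x by simp
        then show "inverse x \<in> L'" using inL' x \<open>a1 \<noteq> 0\<close> by simp
      }
    next
      show "L' \<subseteq> val_ring w"
      proof
        fix x assume "x \<in> L'"
        then obtain a1 b1 where x: "x = poly a1 u / poly b1 u" "a1 \<in> Lpoly L" "b1 \<in> Lpoly L" "b1 \<noteq> 0"
          unfolding L'_def by blast
        show "x \<in> val_ring w"
        proof (cases "a1 = 0")
          case True then show ?thesis using x by (simp add: val_ring_def)
        next
          case False
          then show ?thesis using G[OF x(2) False] G[OF x(3,4)] x(1) by (simp add: val_ring_def wdivide)
        qed
      qed
    qed
    moreover have "L \<subseteq> L'"
    proof
      fix l assume "l \<in> L"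
      then have "poly [:l:] u / poly 1 u \<in> L'" by (intro inL' U(9) U(2)) auto
      then show "l \<in> L'" by simp
    qed
    moreover have "poly [:0, 1:] u / poly 1 u \<in> L'" by (intro inL' X U(2)) auto
    then have "u \<in> L'" by simp
    ultimately show ?thesis by (intro exI[of _ L'] conjI bexI[of _ u]) auto
  next
    case False
    then obtain p0 where "p0 \<in> Bad" by blast
    then obtain p where p: "p \<in> Bad" and pmin: "\<And>q. q \<in> Bad \<Longrightarrow> degree p \<le> degree q"
      using ex_has_least_nat[of "\<lambda>q. q \<in> Bad" p0 degree] by blast
    define d where "d = degree p"
    have pL: "p \<in> Lpoly L" and pnz: "p \<noteq> 0" and pu: "vge w 1 (poly p u)" using p by (auto simp: Bad_def)
    have G: "poly q u \<noteq> 0 \<and> w (poly q u) = 0" if "q \<in> Lpoly L" "q \<noteq> 0" "degree q < d" for q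
    proof -
      have "q \<notin> Bad" using pmin that(3) d_def by fastforce
      then have "\<not> vge w 1 (poly q u)" using that by (simp add: Bad_def)
      then show ?thesis using pv[OF that(1)] by (simp add: vge_def)
    qed
    have d1: "d \<ge> 1"
    proof (rule ccontr)
      assume "\<not> d \<ge> 1"
      then have "degree p = 0" by (simp add: d_def)
      then obtain p0 where p0: "p = [:p0:]" by (metis degree_eq_zeroE)
      then have "p0 \<in> L" "p0 \<noteq> 0" using U(12)[OF pL, of 0] pnz by auto
      then have "w p0 = 0" using ufield_w0[OF L] by blast
      then show False using pu p0 \<open>p0 \<noteq> 0\<close> by (simp add: vge_def)
    qed
    have dpL: "pderiv p \<in> Lpoly L" using U(11)[OF pL] .
    have "coeff (pderiv p) (d - 1) = of_nat d * coeff p d"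
      using d1 by (simp add: coeff_pderiv del: of_nat_Suc)
    moreover have "coeff p d \<noteq> 0" using pnz by (simp add: d_def)
    ultimately have "coeff (pderiv p) (d - 1) \<noteq> 0" using char[of d] d1 by simp
    then have dpnz: "pderiv p \<noteq> 0" by auto
    have "degree (pderiv p) \<le> d - 1"
    proof (rule degree_le, intro allI impI)
      fix i assume "d - 1 < i"
      then have "coeff p (Suc i) = 0" by (intro coeff_eq_0) (simp add: d_def)
      then show "coeff (pderiv p) i = 0" by (simp add: coeff_pderiv)
    qed
    then have "degree (pderiv p) < d" using d1 by simp
    from G[OF dpL dpnz this] have du: "poly (pderiv p) u \<noteq> 0" "w (poly (pderiv p) u) = 0" by auto
    obtain c where cu: "vge w 1 (c - u)" and pc: "poly p c = 0"
      using hensel[OF complete Lpoly_Vpoly[OF L pL] u0 pu du] by blast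
    have h0: "vge w 0 (c - u)" using vge_mono[OF cu] by simp
    have Gc: "poly q c \<noteq> 0 \<and> w (poly q c) = 0" if qq: "q \<in> Lpoly L" "q \<noteq> 0" "degree q < d" for q
    proof -
      obtain D where D: "vge w 0 D" "poly q (u + (c - u)) = poly q u + (c - u) * D"
        using taylor1[OF Lpoly_Vpoly[OF L qq(1)] u0 h0] by blast
      have g: "poly q u \<noteq> 0" "w (poly q u) = 0" using G[OF qq] by auto
      have "vge w (1 + 0) ((c - u) * D)" by (rule vge_mult[OF cu D(1)])
      then have "vge w (w (poly q u) + 1) ((c - u) * D)" using g by simp
      from vge_strict[OF g(1) this] show ?thesis using D(2) g by simp
    qed
    have red: "\<exists>r. r \<in> Lpoly L \<and> (r = 0 \<or> degree r < d) \<and> poly r c = poly q c" if qq: "q \<in> Lpoly L" for q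
    proof -
      obtain s r where sr: "s \<in> Lpoly L" "r \<in> Lpoly L" "q = s * p + r" "r = 0 \<or> degree r < degree p"
        using Ldiv[OF L pL pnz qq] by blast
      then show ?thesis using pc by (intro exI[of _ r]) (auto simp: d_def)
    qed
    have inv: "\<forall>r. degree r = k \<longrightarrow> r \<in> Lpoly L \<longrightarrow> r \<noteq> 0 \<longrightarrow> degree r < d \<longrightarrow>
        (\<exists>s\<in>Lpoly L. poly s c * poly r c = 1)" for k
    proof (induction k rule: less_induct)
      case (less k)
      show ?case
      proof (intro allI impI)
        fix r assume r: "degree r = k" "r \<in> Lpoly L" "r \<noteq> 0" "degree r < d"
        show "\<exists>s\<in>Lpoly L. poly s c * poly r c = 1"
        proof (cases "k = 0")
          case True
          then obtain r0 where r0: "r = [:r0:]" using r(1) by (metis degree_eq_zeroE)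
          then have "r0 \<in> L" "r0 \<noteq> 0" using U(12)[OF r(2), of 0] r(3) by auto
          then have "[:inverse r0:] \<in> Lpoly L" using U(9) US(6) by blast
          then show ?thesis using r0 \<open>r0 \<noteq> 0\<close> by (intro bexI[of _ "[:inverse r0:]"]) auto
        next
          case False
          obtain q r1 where qr: "q \<in> Lpoly L" "r1 \<in> Lpoly L" "p = q * r + r1" "r1 = 0 \<or> degree r1 < degree r"
            using Ldiv[OF L r(2) r(3) pL] by blast
          show ?thesis
          proof (cases "r1 = 0")
            case True
            then have pqr: "p = q * r" using qr by simp
            then have qnz: "q \<noteq> 0" using pnz by auto
            have "degree p = degree q + degree r" using pqr degree_mult_eq[OF qnz r(3)] by simp
            then have "degree q < d" "degree r < d" using False r by (auto simp: d_def)
            then have "poly q u \<noteq> 0 \<and> w (poly q u) = 0" "poly r u \<noteq> 0 \<and> w (poly r u) = 0"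
              using G qnz qr(1) r(2,3) by blast+
            then have "poly p u \<noteq> 0 \<and> w (poly p u) = 0" using pqr wmult by simp
            then show ?thesis using pu by (simp add: vge_def)
          next
            case False
            have "degree r1 < k" using qr(4) False r(1) by simp
            moreover have "degree r1 < d" using qr(4) False r by simp
            ultimately obtain s1 where s1: "s1 \<in> Lpoly L" "poly s1 c * poly r1 c = 1"
              using less.IH qr(2) False by blast
            have "poly r1 c = - (poly q c * poly r c)" using pc qr(3)
              by (simp add: eq_neg_iff_add_eq_0 add.commute)
            then have "poly (- (s1 * q)) c * poly r c = 1" using s1(2) by (simp add: algebra_simps)
            then show ?thesis using U(4)[OF U(6)[OF s1(1) qr(1)]] by blast
          qed
        qed
      qed
    qed
    define L' where "L' = (\<lambda>q. poly q c) ` Lpoly L"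
    have inL': "poly q c \<in> L'" if "q \<in> Lpoly L" for q using that unfolding L'_def by blast
    have "ufield w L'"
      unfolding ufield_def
    proof (intro conjI ballI impI)
      show "0 \<in> L'" using inL'[OF U(1)] by simp
      show "1 \<in> L'" using inL'[OF U(2)] by simp
      fix x assume "x \<in> L'"
      then obtain a where x: "x = poly a c" "a \<in> Lpoly L" unfolding L'_def by blast
      {
        fix y assume "y \<in> L'"
        then obtain b where y: "y = poly b c" "b \<in> Lpoly L" unfolding L'_def by blast
        show "x + y \<in> L'" using inL'[OF U(3)[OF x(2) y(2)]] x y by simp
        show "x * y \<in> L'" using inL'[OF U(6)[OF x(2) y(2)]] x y by simp
      }
      show "- x \<in> L'" using inL'[OF U(4)[OF x(2)]] x by simp
      {
        assume "x \<noteq> 0"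
        obtain r where r: "r \<in> Lpoly L" "r = 0 \<or> degree r < d" "poly r c = x"
          using red[OF x(2)] x(1) by auto
        then have "r \<noteq> 0" using \<open>x \<noteq> 0\<close> by auto
        then obtain s where s: "s \<in> Lpoly L" "poly s c * poly r c = 1" using inv r by blast
        then have "inverse x = poly s c" using r(3) by (metis inverse_unique mult.commute)
        then show "inverse x \<in> L'" using inL'[OF s(1)] by simp
      }
    next
      show "L' \<subseteq> val_ring w"
      proof
        fix x assume "x \<in> L'"
        then obtain a where x: "x = poly a c" "a \<in> Lpoly L" unfolding L'_def by blast
        obtain r where r: "r \<in> Lpoly L" "r = 0 \<or> degree r < d" "poly r c = x"
          using red[OF x(2)] x(1) by auto
        show "x \<in> val_ring w"
        proof (cases "r = 0")
          case True then show ?thesis using r by (simp add: val_ring_def)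
        next
          case False then show ?thesis using Gc[OF r(1) False] r by (auto simp: val_ring_def)
        qed
      qed
    qed
    moreover have "L \<subseteq> L'"
    proof
      fix l assume "l \<in> L"
      then show "l \<in> L'" using inL'[OF U(9)[OF \<open>l \<in> L\<close>]] by simp
    qed
    moreover have "c \<in> L'" using inL'[OF X] by simp
    moreover have "vge w 1 (u - c)" using vge_uminus[OF cu] by simp
    ultimately show ?thesis by blast
  qed
qed

end


inductive Aset :: "('f::field \<Rightarrow> int) \<Rightarrow> 'f set \<Rightarrow> ('n \<Rightarrow> 'f) \<Rightarrow> int \<Rightarrow> 'f \<Rightarrow> bool"
  for w L Y where
  A_L: "l \<in> L \<Longrightarrow> s \<le> 0 \<Longrightarrow> Aset w L Y s l"
| A_zero: "Aset w L Y s 0"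
| A_var: "Y j \<noteq> 0 \<Longrightarrow> s \<le> w (Y j) \<Longrightarrow> Aset w L Y s (Y j)"
| A_add: "Aset w L Y s a \<Longrightarrow> Aset w L Y s b \<Longrightarrow> Aset w L Y s (a + b)"
| A_mult: "Aset w L Y s a \<Longrightarrow> Aset w L Y t b \<Longrightarrow> r \<le> s + t \<Longrightarrow> Aset w L Y r (a * b)"

lemma coeff_subfield_iff: "coeff_subfield \<iota> w L \<longleftrightarrow> ufield w L \<and> range (\<lambda>c. \<iota> (ps_const c)) \<subseteq> L"
  unfolding coeff_subfield_def ufield_def by blast

context vfield
begin

lemma Aset_mono: "Aset w L Y s z \<Longrightarrow> r \<le> s \<Longrightarrow> Aset w L Y r z"
proof (induction arbitrary: r rule: Aset.induct)
  case (A_L l s) then show ?case by (auto intro: Aset.A_L)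
next
  case (A_zero s) then show ?case by (simp add: Aset.A_zero)
next
  case (A_var j s) then show ?case by (auto intro: Aset.A_var)
next
  case (A_add s a b) then show ?case by (auto intro: Aset.A_add)
next
  case (A_mult s a t b r')
  have "Aset w L Y s a" "Aset w L Y t b" using A_mult.IH by auto
  then show ?case using A_mult.prems A_mult.hyps(3) by (intro Aset.A_mult) auto
qed

lemma Aset_sound: assumes L: "ufield w L" shows "Aset w L Y s z \<Longrightarrow> vge w s z"
proof (induction rule: Aset.induct)
  case (A_L l s) then show ?case using ufield_w0[OF L, of l] by (cases "l = 0") (auto simp: vge_def)
next
  case (A_zero s) then show ?case by simp
next
  case (A_var j s) then show ?case by (simp add: vge_def)
next
  case (A_add s a b) then show ?case by (auto intro: vge_add)
next
  case (A_mult s a t b r) then show ?case using vge_mult vge_mono by blast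
qed

lemma Aset_Lmult: "l \<in> L \<Longrightarrow> Aset w L Y s a \<Longrightarrow> Aset w L Y s (l * a)"
proof -
  assume a: "l \<in> L" "Aset w L Y s a"
  have "Aset w L Y 0 l" using a by (intro Aset.A_L) auto
  from Aset.A_mult[OF this a(2), of s] show ?thesis by simp
qed

lemma Aset_uminus: "ufield w L \<Longrightarrow> Aset w L Y s a \<Longrightarrow> Aset w L Y s (- a)"
  using Aset_Lmult[of "-1" L Y s a] ufield_simps(2,5)[of L] by simp

lemma Aset_diff: "ufield w L \<Longrightarrow> Aset w L Y s a \<Longrightarrow> Aset w L Y s b \<Longrightarrow> Aset w L Y s (a - b)"
  using Aset.A_add[of w L Y s a "-b"] Aset_uminus[of L Y s b] by simp

lemma Aset_power: "ufield w L \<Longrightarrow> Y i \<noteq> 0 \<Longrightarrow> Aset w L Y (int e * w (Y i)) (Y i ^ e)"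
proof (induction e)
  case 0 then show ?case using Aset.A_L[of 1 L 0] ufield_simps(2) by simp
next
  case (Suc e)
  have "Aset w L Y (w (Y i)) (Y i)" using Suc by (intro Aset.A_var) auto
  from Aset.A_mult[OF this Suc.IH[OF Suc.prems], of "int (Suc e) * w (Y i)"]
  show ?case by (simp add: algebra_simps)
qed

lemma Aset_sum: "(\<And>i. i \<in> S \<Longrightarrow> Aset w L Y s (f i)) \<Longrightarrow> Aset w L Y s (\<Sum>i\<in>S. f i)"
  by (induction S rule: infinite_finite_induct) (auto intro: Aset.A_add Aset.A_zero)

lemma Aset_transfer:
  assumes LL: "L \<subseteq> L'" and V: "\<And>j. Y j \<noteq> 0 \<Longrightarrow> Aset w L' Y' (w (Y j)) (Y j)"
  shows "Aset w L Y s z \<Longrightarrow> Aset w L' Y' s z"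
proof (induction rule: Aset.induct)
  case (A_L l s) then show ?case using LL by (auto intro: Aset.A_L)
next
  case (A_zero s) then show ?case by (simp add: Aset.A_zero)
next
  case (A_var j s) then show ?case using V Aset_mono by blast
next
  case (A_add s a b) then show ?case by (auto intro: Aset.A_add)
next
  case (A_mult s a t b r) then show ?case by (auto intro: Aset.A_mult)
qed

lemma Aset_monoidal:
  assumes "i \<noteq> j" "Y i \<noteq> 0" "Y j \<noteq> 0" "w (Y j) > w (Y i)"
  shows "Aset w L Y s z \<Longrightarrow> Aset w L (Y(j := Y j / Y i)) s z"
proof (rule Aset_transfer[of L L])
  fix k assume k: "Y k \<noteq> 0"
  let ?Y' = "Y(j := Y j / Y i)"
  show "Aset w L ?Y' (w (Y k)) (Y k)"
  proof (cases "k = j")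
    case False
    then show ?thesis using Aset.A_var[of ?Y' k "w (Y k)"] k by simp
  next
    case True
    have a: "Aset w L ?Y' (w (Y i)) (?Y' i)" using assms by (intro Aset.A_var) auto
    have b: "Aset w L ?Y' (w (Y j) - w (Y i)) (?Y' j)" using assms
      by (intro Aset.A_var) (auto simp: wdivide)
    have "Aset w L ?Y' (w (Y j)) (?Y' i * ?Y' j)" by (rule Aset.A_mult[OF a b]) simp
    then show ?thesis using True assms by simp
  qed
qed simp

lemma KD:
  assumes L: "ufield w L" and L': "ufield w L'" and LL: "L \<subseteq> L'" and g: "g > 0"
    and eq: "\<And>j. Y j \<noteq> 0 \<Longrightarrow> w (Y j) = g" and i0: "Y i0 \<noteq> 0"
    and cL: "\<And>j. c j \<in> L'"
    and Y'def: "Y' = (\<lambda>j. if j = i0 then Y i0 else Y j - c j * Y i0)"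
    and big: "\<And>j. j \<noteq> i0 \<Longrightarrow> vge w (g + 1) (Y' j)"
  shows "Aset w L Y s z \<Longrightarrow> \<exists>lm\<in>L'. \<exists>e::nat. (lm = 0 \<or> int e * g = s) \<and> Aset w L' Y' (s + 1) (z - lm * Y i0 ^ e)"
proof (induction rule: Aset.induct)
  have Y'i0: "Y' i0 = Y i0" by (simp add: Y'def)
  have wi0: "w (Y i0) = g" using eq i0 by simp
  have bigA: "Aset w L' Y' (g + 1) (Y' j)" if "j \<noteq> i0" for j
  proof (cases "Y' j = 0")
    case True then show ?thesis using Aset.A_zero[of w L' Y' "g+1"] by simp
  next
    case False then show ?thesis using big[OF that] by (intro Aset.A_var) (auto simp: vge_def)
  qed
  have i0A: "Aset w L' Y' g (Y i0)" using Aset.A_var[of Y' i0 g w L'] Y'i0 i0 wi0 by simp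
  have YA: "Aset w L' Y' g (Y j)" if "Y j \<noteq> 0" for j
  proof (cases "j = i0")
    case True then show ?thesis using i0A by simp
  next
    case False
    have "Y j = Y' j + c j * Y i0" using False by (simp add: Y'def)
    moreover have "Aset w L' Y' g (Y' j)" using Aset_mono[OF bigA[OF False]] by simp
    moreover have "Aset w L' Y' g (c j * Y i0)" using Aset_Lmult[OF cL i0A] .
    ultimately show ?thesis using Aset.A_add by metis
  qed
  have powA: "Aset w L' Y' (int e * g) (Y i0 ^ e)" for e
    using Aset_power[OF L', of Y' i0 e] Y'i0 i0 wi0 by simp
  have lead: "Aset w L' Y' s (lm * Y i0 ^ e)" if "lm \<in> L'" "lm = 0 \<or> int e * g = s" for lm e s
  proof (cases "lm = 0")
    case True then show ?thesis using Aset.A_zero[of w L' Y' s] by simp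
  next
    case False then show ?thesis using that Aset_Lmult[OF that(1) powA[of e]] by simp
  qed
  have mk: "\<exists>lm\<in>L'. \<exists>e::nat. (lm = 0 \<or> int e * g = s) \<and> Aset w L' Y' (s + 1) (z - lm * Y i0 ^ e)"
    if "lm \<in> L'" "lm = 0 \<or> int e * g = s" "Aset w L' Y' (s + 1) (z - lm * Y i0 ^ e)" for lm e s z
    using that by blast
  have mk0: "\<exists>lm\<in>L'. \<exists>e::nat. (lm = 0 \<or> int e * g = s) \<and> Aset w L' Y' (s + 1) (z - lm * Y i0 ^ e)"
    if "Aset w L' Y' (s + 1) z" for s z
    using mk[OF ufield_simps(1)[OF L'], of 0 s z] that by simp
  {
    case (A_L l s)
    show ?case
    proof (cases "s = 0")
      case True
      have "l \<in> L'" using A_L LL by blast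
      moreover have "Aset w L' Y' (s + 1) (l - l * Y i0 ^ 0)" using Aset.A_zero[of w L' Y' "s+1"] by simp
      ultimately show ?thesis using mk[of l 0 s l] True by simp
    next
      case False
      then have "Aset w L' Y' (s + 1) l" using A_L LL by (intro Aset.A_L) auto
      then show ?thesis by (rule mk0)
    qed
  next
    case (A_zero s)
    show ?case by (rule mk0) (simp add: Aset.A_zero)
  next
    case (A_var j s)
    have wj: "w (Y j) = g" using eq A_var by simp
    show ?case
    proof (cases "s = g")
      case False
      then have "s + 1 \<le> g" using A_var wj by simp
      then have "Aset w L' Y' (s + 1) (Y j)" using Aset_mono[OF YA[OF A_var(1)]] by simp
      then show ?thesis by (rule mk0)
    next
      case True
      show ?thesis
      proof (cases "j = i0")
        case True
        have "Aset w L' Y' (s + 1) (Y j - 1 * Y i0 ^ 1)" using True Aset.A_zero[of w L' Y' "s+1"] by simp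
        then show ?thesis using mk[OF ufield_simps(2)[OF L'], of 1 s "Y j"] \<open>s = g\<close> by simp
      next
        case False
        have "Y j - c j * Y i0 ^ 1 = Y' j" using False by (simp add: Y'def)
        then have "Aset w L' Y' (s + 1) (Y j - c j * Y i0 ^ 1)" using bigA[OF False] \<open>s = g\<close> by simp
        then show ?thesis using mk[OF cL, of j 1 s "Y j"] \<open>s = g\<close> by simp
      qed
    qed
  next
    case (A_add s a b)
    then obtain la ea lb eb where a: "la \<in> L'" "la = 0 \<or> int ea * g = s" "Aset w L' Y' (s + 1) (a - la * Y i0 ^ ea)"
      and b: "lb \<in> L'" "lb = 0 \<or> int eb * g = s" "Aset w L' Y' (s + 1) (b - lb * Y i0 ^ eb)" by blast
    define e where "e = (if la = 0 then eb else ea)"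
    have ea': "la * Y i0 ^ e = la * Y i0 ^ ea" by (simp add: e_def)
    have eb': "lb * Y i0 ^ e = lb * Y i0 ^ eb"
    proof (cases "la = 0 \<or> lb = 0")
      case True then show ?thesis by (auto simp: e_def)
    next
      case False
      then have "int ea * g = int eb * g" using a(2) b(2) by simp
      then have "ea = eb" using g by simp
      then show ?thesis by (simp add: e_def)
    qed
    have "(a + b) - (la + lb) * Y i0 ^ e = (a - la * Y i0 ^ e) + (b - lb * Y i0 ^ e)"
      by (simp add: algebra_simps)
    also have "\<dots> = (a - la * Y i0 ^ ea) + (b - lb * Y i0 ^ eb)" by (simp only: ea' eb')
    finally have "(a + b) - (la + lb) * Y i0 ^ e = (a - la * Y i0 ^ ea) + (b - lb * Y i0 ^ eb)" .
    then have "Aset w L' Y' (s + 1) ((a + b) - (la + lb) * Y i0 ^ e)"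
      using Aset.A_add[OF a(3) b(3)] by (simp only:)
    moreover have "la + lb = 0 \<or> int e * g = s" using a(2) b(2) by (auto simp: e_def)
    ultimately show ?case using mk[OF ufield_simps(3)[OF L' a(1) b(1)]] by blast
  next
    case (A_mult s a t b r)
    then obtain la ea lb eb where a: "la \<in> L'" "la = 0 \<or> int ea * g = s" "Aset w L' Y' (s + 1) (a - la * Y i0 ^ ea)"
      and b: "lb \<in> L'" "lb = 0 \<or> int eb * g = t" "Aset w L' Y' (t + 1) (b - lb * Y i0 ^ eb)" by blast
    define ra where "ra = a - la * Y i0 ^ ea"
    define rb where "rb = b - lb * Y i0 ^ eb"
    have la: "Aset w L' Y' s (la * Y i0 ^ ea)" by (rule lead[OF a(1,2)])
    have lb: "Aset w L' Y' t (lb * Y i0 ^ eb)" by (rule lead[OF b(1,2)])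
    have ab: "a * b - (la * lb) * Y i0 ^ (ea + eb) =
        (la * Y i0 ^ ea) * rb + ra * (lb * Y i0 ^ eb) + ra * rb"
      by (simp add: ra_def rb_def algebra_simps power_add)
    have R: "Aset w L' Y' (s + t + 1) (a * b - (la * lb) * Y i0 ^ (ea + eb))"
      unfolding ab
    proof (intro Aset.A_add)
      show "Aset w L' Y' (s + t + 1) (la * Y i0 ^ ea * rb)"
        using Aset.A_mult[OF la b(3)[folded rb_def], of "s + t + 1"] by simp
      show "Aset w L' Y' (s + t + 1) (ra * (lb * Y i0 ^ eb))"
        using Aset.A_mult[OF a(3)[folded ra_def] lb, of "s + t + 1"] by simp
      show "Aset w L' Y' (s + t + 1) (ra * rb)"
        using Aset.A_mult[OF a(3)[folded ra_def] b(3)[folded rb_def], of "s + t + 1"] by simp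
    qed
    show ?case
    proof (cases "r = s + t")
      case True
      have "la * lb = 0 \<or> int (ea + eb) * g = r" using a(2) b(2) True by (auto simp: algebra_simps)
      from mk[OF ufield_simps(4)[OF L' a(1) b(1)] this R[folded True]] show ?thesis .
    next
      case False
      then have "r + 1 \<le> s + t" using A_mult by simp
      have aA: "Aset w L' Y' s a"
      proof -
        have "a = la * Y i0 ^ ea + ra" by (simp add: ra_def)
        then show ?thesis using Aset.A_add[OF la Aset_mono[OF a(3)[folded ra_def]]] by simp
      qed
      have bA: "Aset w L' Y' t b"
      proof -
        have "b = lb * Y i0 ^ eb + rb" by (simp add: rb_def)
        then show ?thesis using Aset.A_add[OF lb Aset_mono[OF b(3)[folded rb_def]]] by simp
      qed
      have "Aset w L' Y' (r + 1) (a * b)" using Aset.A_mult[OF aA bA] \<open>r + 1 \<le> s + t\<close> by simp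
      then show ?thesis by (rule mk0)
    qed
  }
qed

end


context vfield
begin

lemma KD_cons:
  assumes L: "ufield w L" and L': "ufield w L'" and LL: "L \<subseteq> L'" and g: "g > 0"
    and eq: "\<And>j. Y j \<noteq> 0 \<Longrightarrow> w (Y j) = g" and i0: "Y i0 \<noteq> 0"
    and cL: "\<And>j. c j \<in> L'"
    and Y'def: "Y' = (\<lambda>j. if j = i0 then Y i0 else Y j - c j * Y i0)"
    and big: "\<And>j. j \<noteq> i0 \<Longrightarrow> vge w (g + 1) (Y' j)"
  shows "Aset w L Y s z \<Longrightarrow> Aset w L' Y' s z"
    and "Aset w L Y s z \<Longrightarrow> z \<noteq> 0 \<Longrightarrow> (w z \<noteq> s \<or> \<not> g dvd s) \<Longrightarrow> Aset w L' Y' (s + 1) z"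
proof -
  have Y'i0: "Y' i0 = Y i0" by (simp add: Y'def)
  have wi0: "w (Y i0) = g" using eq i0 by simp
  have powA: "Aset w L' Y' (int e * g) (Y i0 ^ e)" for e
    using Aset_power[OF L', of Y' i0 e] Y'i0 i0 wi0 by simp
  {
    assume A: "Aset w L Y s z"
    obtain lm e where le: "lm \<in> L'" "lm = 0 \<or> int e * g = s" "Aset w L' Y' (s + 1) (z - lm * Y i0 ^ e)"
      using KD[OF L L' LL g eq i0 cL Y'def big A] by blast
    have lead: "Aset w L' Y' s (lm * Y i0 ^ e)"
    proof (cases "lm = 0")
      case True then show ?thesis by (simp add: Aset.A_zero)
    next
      case False then show ?thesis using le Aset_Lmult[OF le(1) powA[of e]] by simp
    qed
    have "z = (z - lm * Y i0 ^ e) + lm * Y i0 ^ e" by simp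
    then show "Aset w L' Y' s z" using Aset.A_add[OF Aset_mono[OF le(3)] lead] by (metis add_diff_cancel_left' diff_add_cancel le_add_same_cancel1 zero_less_one less_imp_le)
    assume z: "z \<noteq> 0" and c: "w z \<noteq> s \<or> \<not> g dvd s"
    show "Aset w L' Y' (s + 1) z"
    proof (cases "lm = 0")
      case True then show ?thesis using le(3) by simp
    next
      case False
      then have es: "int e * g = s" using le(2) by simp
      then have "w z \<noteq> s" using c by auto
      moreover have "vge w s z" using Aset_sound[OF L A] .
      ultimately have zz: "vge w (s + 1) z" using z by (auto simp: vge_def)
      have rr: "vge w (s + 1) (z - lm * Y i0 ^ e)" using Aset_sound[OF L' le(3)] .
      have "vge w (s + 1) (z - (z - lm * Y i0 ^ e))" by (rule vge_diff[OF zz rr])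
      then have "vge w (s + 1) (lm * Y i0 ^ e)" by simp
      moreover have "lm * Y i0 ^ e \<noteq> 0" using False i0 by simp
      moreover have "w (lm * Y i0 ^ e) = s"
        using wmult[of lm "Y i0 ^ e"] wpower[OF i0, of e] ufield_w0[OF L' le(1) False] False i0 wi0 es
        by simp
      ultimately show ?thesis by (simp add: vge_def)
    qed
  }
qed

lemma euclid:
  fixes Y :: "'n::finite \<Rightarrow> 'f" and \<iota> :: "('n, 'k::comm_ring_1) mps \<Rightarrow> 'f"
  shows "(\<Sum>j\<in>UNIV. if Y j = 0 then 0 else nat (w (Y j))) = m \<Longrightarrow> (\<forall>j. Y j \<noteq> 0 \<longrightarrow> w (Y j) \<ge> 1) \<Longrightarrow> Y i1 \<noteq> 0 \<Longrightarrow>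
   \<exists>Y'. (transf_step \<iota> w)\<^sup>*\<^sup>* Y Y' \<and> (\<forall>L s z. Aset w L Y s z \<longrightarrow> Aset w L Y' s z) \<and>
     (\<forall>j. Y' j \<noteq> 0 \<longrightarrow> w (Y' j) \<ge> 1) \<and> (\<exists>i. Y' i \<noteq> 0 \<and> (\<forall>j. Y' j \<noteq> 0 \<longrightarrow> w (Y' j) = w (Y' i)))"
proof (induction m arbitrary: Y i1 rule: less_induct)
  case (less m)
  obtain i where i: "Y i \<noteq> 0" and imin: "\<And>j. Y j \<noteq> 0 \<Longrightarrow> nat (w (Y i)) \<le> nat (w (Y j))"
    using ex_has_least_nat[of "\<lambda>j. Y j \<noteq> 0" i1 "\<lambda>j. nat (w (Y j))"] less.prems(3) by blast
  have imin': "w (Y i) \<le> w (Y j)" if "Y j \<noteq> 0" for j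
    using imin[OF that] less.prems(2) that i by auto
  show ?case
  proof (cases "\<forall>j. Y j \<noteq> 0 \<longrightarrow> w (Y j) = w (Y i)")
    case True
    then show ?thesis using less.prems i by blast
  next
    case False
    then obtain j where j: "Y j \<noteq> 0" "w (Y j) \<noteq> w (Y i)" by blast
    then have ji: "w (Y j) > w (Y i)" using imin'[OF j(1)] by simp
    then have "i \<noteq> j" by auto
    define Y2 where "Y2 = Y(j := Y j / Y i)"
    have step: "transf_step \<iota> w Y Y2" unfolding Y2_def
      using transf_step.monoidal[OF \<open>i \<noteq> j\<close> i j(1) ji] .
    have wi1: "w (Y i) \<ge> 1" using less.prems(2) i by blast
    have Y2j: "Y2 j \<noteq> 0" "w (Y2 j) = w (Y j) - w (Y i)" using i j by (auto simp: Y2_def wdivide)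
    have wts: "\<forall>k. Y2 k \<noteq> 0 \<longrightarrow> w (Y2 k) \<ge> 1"
      using less.prems(2) Y2j ji by (auto simp: Y2_def)
    have Y2i: "Y2 i \<noteq> 0" using i \<open>i \<noteq> j\<close> by (simp add: Y2_def)
    have "(\<Sum>k\<in>UNIV. if Y2 k = 0 then 0 else nat (w (Y2 k))) < (\<Sum>k\<in>UNIV. if Y k = 0 then 0 else nat (w (Y k)))"
    proof (rule sum_strict_mono_ex1)
      show "\<forall>k\<in>UNIV. (if Y2 k = 0 then 0 else nat (w (Y2 k))) \<le> (if Y k = 0 then 0 else nat (w (Y k)))"
        using Y2j wi1 j by (auto simp: Y2_def)
      show "\<exists>k\<in>UNIV. (if Y2 k = 0 then 0 else nat (w (Y2 k))) < (if Y k = 0 then 0 else nat (w (Y k)))"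
        using Y2j wi1 j ji by (intro bexI[of _ j]) auto
    qed simp
    then obtain Y' where Y': "(transf_step \<iota> w)\<^sup>*\<^sup>* Y2 Y'" "\<forall>L s z. Aset w L Y2 s z \<longrightarrow> Aset w L Y' s z"
       "\<forall>j. Y' j \<noteq> 0 \<longrightarrow> w (Y' j) \<ge> 1" "\<exists>i. Y' i \<noteq> 0 \<and> (\<forall>j. Y' j \<noteq> 0 \<longrightarrow> w (Y' j) = w (Y' i))"
      using less.IH[OF _ refl wts Y2i] less.prems(1) by blast
    have "(transf_step \<iota> w)\<^sup>*\<^sup>* Y Y'" using converse_rtranclp_into_rtranclp[OF step Y'(1)] .
    moreover have "\<forall>L s z. Aset w L Y s z \<longrightarrow> Aset w L Y' s z"
      using Y'(2) Aset_monoidal[OF \<open>i \<noteq> j\<close> i j(1) ji] unfolding Y2_def by blast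
    ultimately show ?thesis using Y'(3,4) by blast
  qed
qed

end


context vfield
begin

lemma round:
  fixes Y :: "'n::finite \<Rightarrow> 'f" and \<iota> :: "('n, 'k::comm_ring_1) mps \<Rightarrow> 'f"
  assumes complete: "val_complete w"
    and char: "\<And>n. n > 0 \<Longrightarrow> of_nat n \<noteq> (0::'f)"
    and L: "coeff_subfield \<iota> w L" and g: "g \<ge> 1"
    and eq: "\<And>j. Y j \<noteq> 0 \<Longrightarrow> w (Y j) = g" and i0: "Y i0 \<noteq> 0"
  shows "\<exists>L' Y'. coeff_subfield \<iota> w L' \<and> (transf_step \<iota> w)\<^sup>*\<^sup>* Y Y' \<and> Y' i0 \<noteq> 0 \<and>
     (\<forall>j. Y' j \<noteq> 0 \<longrightarrow> w (Y' j) \<ge> 1) \<and> (\<forall>s z. Aset w L Y s z \<longrightarrow> Aset w L' Y' s z) \<and>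
     (\<forall>s z. Aset w L Y s z \<longrightarrow> z \<noteq> 0 \<longrightarrow> (w z \<noteq> s \<or> \<not> g dvd s) \<longrightarrow> Aset w L' Y' (s + 1) z)"
proof -
  have Lu: "ufield w L" and Lr: "range (\<lambda>c. \<iota> (ps_const c)) \<subseteq> L" using L coeff_subfield_iff by blast+
  define u where "u j = Y j / Y i0" for j
  have uw: "u j \<noteq> 0 \<and> w (u j) = 0" if "Y j \<noteq> 0" for j
    using that i0 eq[OF that] eq[OF i0] by (simp add: u_def wdivide)
  have ext: "finite S \<Longrightarrow> (\<forall>j\<in>S. Y j \<noteq> 0) \<Longrightarrow>
      \<exists>L'. ufield w L' \<and> L \<subseteq> L' \<and> (\<exists>c. \<forall>j\<in>S. c j \<in> L' \<and> vge w 1 (u j - c j))" for S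
  proof (induction S rule: finite_induct)
    case empty then show ?case using Lu by blast
  next
    case (insert j S)
    then obtain L1 c where L1: "ufield w L1" "L \<subseteq> L1" "\<forall>k\<in>S. c k \<in> L1 \<and> vge w 1 (u k - c k)" by auto
    obtain L2 cj where L2: "ufield w L2" "L1 \<subseteq> L2" "cj \<in> L2" "vge w 1 (u j - cj)"
      using ext_field[OF complete char L1(1)] uw insert.prems by blast
    have "\<forall>k\<in>insert j S. (c(j := cj)) k \<in> L2 \<and> vge w 1 (u k - (c(j := cj)) k)"
      using L1(3) L2 by auto
    then show ?case using L1(2) L2(1,2) by blast
  qed
  have "\<exists>L'. ufield w L' \<and> L \<subseteq> L' \<and> (\<exists>c. \<forall>j\<in>{j. Y j \<noteq> 0}. c j \<in> L' \<and> vge w 1 (u j - c j))"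
    by (rule ext) auto
  then obtain L' c where L': "ufield w L'" "L \<subseteq> L'" and c: "\<And>j. Y j \<noteq> 0 \<Longrightarrow> c j \<in> L' \<and> vge w 1 (u j - c j)"
    by blast
  have L'c: "coeff_subfield \<iota> w L'" using L' Lr coeff_subfield_iff by blast
  define cc where "cc j = (if Y j = 0 then 0 else c j)" for j
  have ccL: "cc j \<in> L'" for j using c ufield_simps(1)[OF L'(1)] by (simp add: cc_def)
  define Y' where "Y' = (\<lambda>j. if j = i0 then Y i0 else Y j - cc j * Y i0)"
  have big: "vge w (g + 1) (Y' j)" if "j \<noteq> i0" for j
  proof (cases "Y j = 0")
    case True then show ?thesis using that by (simp add: Y'_def cc_def)
  next
    case False
    have "Y' j = (u j - c j) * Y i0" using that False i0 by (simp add: Y'_def cc_def u_def algebra_simps)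
    moreover have "vge w (1 + g) ((u j - c j) * Y i0)"
      using vge_mult[OF conjunct2[OF c[OF False]], of g "Y i0"] eq[OF i0] by (simp add: vge_def)
    ultimately show ?thesis by (simp add: add.commute)
  qed
  define c1 :: "'n \<Rightarrow> 'f" where "c1 j = (if cc j = 1 then 2 else 1)" for j
  define c2 where "c2 j = cc j - c1 j" for j
  have two: "(2::'f) \<noteq> 0" using char[of 2] by simp
  have c1L: "c1 j \<in> L' \<and> c1 j \<noteq> 0 \<and> w (c1 j) = 0" for j
  proof -
    have "(2::'f) \<in> L'" using ufield_simps(2,3)[OF L'(1)] by (metis one_add_one)
    then have "c1 j \<in> L'" using ufield_simps(2)[OF L'(1)] by (simp add: c1_def)
    moreover have "c1 j \<noteq> 0" using two by (simp add: c1_def)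
    ultimately show ?thesis using ufield_w0[OF L'(1)] by blast
  qed
  have c2L: "c2 j \<in> L' \<and> c2 j \<noteq> 0 \<and> w (c2 j) = 0" for j
  proof -
    have "c2 j \<in> L'" unfolding c2_def using ufield_diff[OF L'(1) ccL] c1L by blast
    moreover have "c2 j \<noteq> 0"
    proof (cases "cc j = 1")
      case True then show ?thesis by (simp add: c2_def c1_def)
    next
      case False then show ?thesis by (simp add: c2_def c1_def)
    qed
    ultimately show ?thesis using ufield_w0[OF L'(1)] by blast
  qed
  define Ya where "Ya = (\<lambda>j. if j = i0 then Y i0 else Y j - c1 j * Y i0)"
  have s1: "transf_step \<iota> w Y Ya" unfolding Ya_def
    by (rule transf_step.coord_change[OF L'c]) (use c1L in blast)
  have s2: "transf_step \<iota> w Ya (\<lambda>j. if j = i0 then Ya i0 else Ya j - c2 j * Ya i0)"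
    by (rule transf_step.coord_change[OF L'c]) (use c2L in blast)
  have "(\<lambda>j. if j = i0 then Ya i0 else Ya j - c2 j * Ya i0) = Y'"
    by (rule HOL.ext) (simp add: Ya_def Y'_def c2_def algebra_simps)
  then have steps: "(transf_step \<iota> w)\<^sup>*\<^sup>* Y Y'" using s1 s2 by auto
  have gpos: "g > 0" using g by simp
  note K = KD_cons[OF Lu L'(1) L'(2) gpos eq i0 ccL Y'_def big]
  have Y'i0: "Y' i0 \<noteq> 0" using i0 by (simp add: Y'_def)
  have wts: "\<forall>j. Y' j \<noteq> 0 \<longrightarrow> w (Y' j) \<ge> 1"
  proof (intro allI impI)
    fix j assume "Y' j \<noteq> 0"
    show "w (Y' j) \<ge> 1"
    proof (cases "j = i0")
      case True then show ?thesis using eq[OF i0] g by (simp add: Y'_def)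
    next
      case False then show ?thesis using big[OF False] \<open>Y' j \<noteq> 0\<close> g by (simp add: vge_def)
    qed
  qed
  have K1: "\<forall>s z. Aset w L Y s z \<longrightarrow> Aset w L' Y' s z" using K(1) by blast
  have K2: "\<forall>s z. Aset w L Y s z \<longrightarrow> z \<noteq> 0 \<longrightarrow> (w z \<noteq> s \<or> \<not> g dvd s) \<longrightarrow> Aset w L' Y' (s + 1) z"
    using K(2) by blast
  show ?thesis using L'c steps Y'i0 wts K1 K2 by blast
qed

lemma main_loop:
  fixes \<iota> :: "('n::finite, 'k::comm_ring_1) mps \<Rightarrow> 'f"
  assumes complete: "val_complete w"
    and char: "\<And>n. n > 0 \<Longrightarrow> of_nat n \<noteq> (0::'f)"
    and Pnz: "P \<noteq> 0" and Qnz: "Q \<noteq> 0" and PQ: "w P = w Q + 1"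
  shows "nat (w P - sP) + nat (w Q - sQ) = m \<Longrightarrow> coeff_subfield \<iota> w L \<Longrightarrow>
    (\<forall>j. Y j \<noteq> 0 \<longrightarrow> w (Y j) \<ge> 1) \<Longrightarrow> Y i1 \<noteq> 0 \<Longrightarrow> Aset w L Y sP P \<Longrightarrow> Aset w L Y sQ Q \<Longrightarrow>
    \<exists>Y'. (transf_step \<iota> w)\<^sup>*\<^sup>* Y Y' \<and> (\<exists>i. Y' i \<noteq> 0 \<and> w (Y' i) = 1)"
proof (induction m arbitrary: Y L sP sQ i1 rule: less_induct)
  case (less m)
  have Lu: "ufield w L" using less.prems(2) coeff_subfield_iff by blast
  obtain Y1 where Y1: "(transf_step \<iota> w)\<^sup>*\<^sup>* Y Y1" "\<forall>L s z. Aset w L Y s z \<longrightarrow> Aset w L Y1 s z"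
     "\<forall>j. Y1 j \<noteq> 0 \<longrightarrow> w (Y1 j) \<ge> 1" "\<exists>i. Y1 i \<noteq> 0 \<and> (\<forall>j. Y1 j \<noteq> 0 \<longrightarrow> w (Y1 j) = w (Y1 i))"
    using euclid[OF refl less.prems(3,4), of \<iota>] by blast
  then obtain i where i: "Y1 i \<noteq> 0" "\<And>j. Y1 j \<noteq> 0 \<Longrightarrow> w (Y1 j) = w (Y1 i)" by blast
  define g where "g = w (Y1 i)"
  have g1: "g \<ge> 1" using Y1(3) i(1) by (simp add: g_def)
  have eqg: "\<And>j. Y1 j \<noteq> 0 \<Longrightarrow> w (Y1 j) = g" using i(2) by (simp add: g_def)
  have AP: "Aset w L Y1 sP P" and AQ: "Aset w L Y1 sQ Q" using Y1(2) less.prems(5,6) by blast+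
  have sP: "sP \<le> w P" using Aset_sound[OF Lu AP] Pnz by (simp add: vge_def)
  have sQ: "sQ \<le> w Q" using Aset_sound[OF Lu AQ] Qnz by (simp add: vge_def)
  show ?case
  proof (cases "g = 1")
    case True then show ?thesis using Y1(1) i(1) by (auto simp: g_def)
  next
    case False
    obtain L' Y' where R: "coeff_subfield \<iota> w L'" "(transf_step \<iota> w)\<^sup>*\<^sup>* Y1 Y'" "Y' i \<noteq> 0"
      "\<forall>j. Y' j \<noteq> 0 \<longrightarrow> w (Y' j) \<ge> 1" "\<forall>s z. Aset w L Y1 s z \<longrightarrow> Aset w L' Y' s z"
      "\<forall>s z. Aset w L Y1 s z \<longrightarrow> z \<noteq> 0 \<longrightarrow> (w z \<noteq> s \<or> \<not> g dvd s) \<longrightarrow> Aset w L' Y' (s + 1) z"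
      using round[where Y=Y1 and g=g, OF complete char less.prems(2) g1 eqg i(1)] by blast
    have L'u: "ufield w L'" using R(1) coeff_subfield_iff by blast
    have YY': "(transf_step \<iota> w)\<^sup>*\<^sup>* Y Y'" using Y1(1) R(2) by simp
    show ?thesis
    proof (cases "g dvd w P")
      case False
      have "sP \<noteq> w P"
      proof
        assume "sP = w P"
        then have "Aset w L' Y' (sP + 1) P" using R(6) AP Pnz False by auto
        then show False using Aset_sound[OF L'u] Pnz \<open>sP = w P\<close> by (force simp: vge_def)
      qed
      then have AP': "Aset w L' Y' (sP + 1) P" using R(6) AP Pnz by auto
      have AQ': "Aset w L' Y' sQ Q" using R(5) AQ by blast
      have "nat (w P - (sP + 1)) + nat (w Q - sQ) < m" using less.prems(1) sP \<open>sP \<noteq> w P\<close> by simp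
      from less.IH[OF this refl R(1) R(4) R(3) AP' AQ'] YY' show ?thesis by (meson rtranclp_trans)
    next
      case True
      have nQ: "\<not> g dvd w Q"
      proof
        assume "g dvd w Q"
        then have "g dvd 1" using True PQ by (metis dvd_add_right_iff)
        then show False using g1 False by (simp add: zdvd1_eq)
      qed
      have "sQ \<noteq> w Q"
      proof
        assume "sQ = w Q"
        then have "Aset w L' Y' (sQ + 1) Q" using R(6) AQ Qnz nQ by auto
        then show False using Aset_sound[OF L'u] Qnz \<open>sQ = w Q\<close> by (force simp: vge_def)
      qed
      then have AQ': "Aset w L' Y' (sQ + 1) Q" using R(6) AQ Qnz by auto
      have AP': "Aset w L' Y' sP P" using R(5) AP by blast
      have "nat (w P - sP) + nat (w Q - (sQ + 1)) < m" using less.prems(1) sQ \<open>sQ \<noteq> w Q\<close> by simp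
      from less.IH[OF this refl R(1) R(4) R(3) AP' AQ'] YY' show ?thesis by (meson rtranclp_trans)
    qed
  qed
qed

end


lemma finite_below: "finite {\<gamma> :: 'n::finite \<Rightarrow> nat. \<forall>j. \<gamma> j \<le> \<beta> j}"
proof (rule finite_subset[OF _ finite_PiE[of UNIV "\<lambda>j. {..\<beta> j}"]])
  show "{\<gamma>. \<forall>j. \<gamma> j \<le> \<beta> j} \<subseteq> PiE UNIV (\<lambda>j. {..\<beta> j})"
    unfolding PiE_UNIV_domain by (auto simp: Pi_def)
qed auto

definition unitv :: "'n \<Rightarrow> 'n \<Rightarrow> nat" where "unitv i = (\<lambda>j. if j = i then 1 else 0)"

lemma ps_X_unitv: "ps_X i = (\<lambda>\<alpha>. if \<alpha> = unitv i then 1 else 0)"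
  by (simp add: ps_X_def unitv_def)

lemma ps_mult_X:
  fixes G :: "('n::finite, 'k::comm_ring_1) mps"
  shows "ps_mult (ps_X i) G = (\<lambda>\<beta>. if \<beta> i \<ge> 1 then G (\<beta>(i := \<beta> i - 1)) else 0)"
proof (rule ext)
  fix \<beta> :: "'n \<Rightarrow> nat"
  have "ps_mult (ps_X i) G \<beta> = (\<Sum>\<gamma>\<in>{\<gamma>. \<forall>j. \<gamma> j \<le> \<beta> j}. if \<gamma> = unitv i then G (\<lambda>j. \<beta> j - \<gamma> j) else 0)"
    unfolding ps_mult_def ps_X_unitv by (intro sum.cong) auto
  also have "\<dots> = (if unitv i \<in> {\<gamma>. \<forall>j. \<gamma> j \<le> \<beta> j} then G (\<lambda>j. \<beta> j - unitv i j) else 0)"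
    by (rule sum.delta[OF finite_below])
  also have "\<dots> = (if \<beta> i \<ge> 1 then G (\<beta>(i := \<beta> i - 1)) else 0)"
  proof -
    have "unitv i \<in> {\<gamma>. \<forall>j. \<gamma> j \<le> \<beta> j} \<longleftrightarrow> \<beta> i \<ge> 1" by (auto simp: unitv_def)
    moreover have "(\<lambda>j. \<beta> j - unitv i j) = \<beta>(i := \<beta> i - 1)" by (auto simp: unitv_def)
    ultimately show ?thesis by simp
  qed
  finally show "ps_mult (ps_X i) G \<beta> = (if \<beta> i \<ge> 1 then G (\<beta>(i := \<beta> i - 1)) else 0)" .
qed

lemma ps_mult_const:
  fixes a b :: "'k::comm_ring_1"
  shows "ps_mult (ps_const a :: ('n::finite, 'k) mps) (ps_const b) = ps_const (a * b)"
proof (rule ext)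
  fix \<beta> :: "'n \<Rightarrow> nat"
  have "ps_mult (ps_const a :: ('n, 'k) mps) (ps_const b) \<beta> =
      (\<Sum>\<gamma>\<in>{\<gamma>. \<forall>j. \<gamma> j \<le> \<beta> j}. if \<gamma> = (\<lambda>_. 0) then a * ps_const b (\<lambda>j. \<beta> j - \<gamma> j) else 0)"
    unfolding ps_mult_def by (intro sum.cong) (auto simp: ps_const_def)
  also have "\<dots> = a * ps_const b \<beta>"
    by (subst sum.delta[OF finite_below]) auto
  finally show "ps_mult (ps_const a :: ('n, 'k) mps) (ps_const b) \<beta> = ps_const (a * b) \<beta>"
    by (simp add: ps_const_def)
qed

lemma ps_add_const: "ps_add (ps_const a) (ps_const b) = ps_const (a + b)"
  by (auto simp: ps_add_def ps_const_def)

lemma ps_const_0: "ps_const 0 = ps_zero"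
  by (auto simp: ps_const_def ps_zero_def)

definition selv :: "('n \<Rightarrow> nat) \<Rightarrow> 'n" where "selv \<beta> = (SOME i. \<beta> i > 0)"

definition Gd :: "('n, 'k::comm_ring_1) mps \<Rightarrow> 'n \<Rightarrow> ('n, 'k) mps" where
  "Gd F i = (\<lambda>\<gamma>. if selv (\<gamma>(i := \<gamma> i + 1)) = i then F (\<gamma>(i := \<gamma> i + 1)) else 0)"

lemma decomp:
  fixes F :: "('n::finite, 'k::comm_ring_1) mps"
  shows "F = ps_add (ps_const (F (\<lambda>_. 0))) (\<lambda>\<beta>. \<Sum>i\<in>UNIV. ps_mult (ps_X i) (Gd F i) \<beta>)"
proof (rule ext)
  fix \<beta> :: "'n \<Rightarrow> nat"
  have S: "(\<Sum>i\<in>UNIV. ps_mult (ps_X i) (Gd F i) \<beta>) = (\<Sum>i\<in>UNIV. if \<beta> i \<ge> 1 \<and> selv \<beta> = i then F \<beta> else 0)"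
  proof (intro sum.cong refl)
    fix i
    show "ps_mult (ps_X i) (Gd F i) \<beta> = (if \<beta> i \<ge> 1 \<and> selv \<beta> = i then F \<beta> else 0)"
    proof (cases "\<beta> i \<ge> 1")
      case True
      then have "(\<beta>(i := \<beta> i - 1))(i := (\<beta>(i := \<beta> i - 1)) i + 1) = \<beta>" by auto
      then show ?thesis using True by (simp add: ps_mult_X Gd_def)
    next
      case False then show ?thesis by (simp add: ps_mult_X)
    qed
  qed
  show "F \<beta> = ps_add (ps_const (F (\<lambda>_. 0))) (\<lambda>\<beta>. \<Sum>i\<in>UNIV. ps_mult (ps_X i) (Gd F i) \<beta>) \<beta>"
  proof (cases "\<beta> = (\<lambda>_. 0)")
    case True
    then show ?thesis using S by (simp add: ps_add_def ps_const_def)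
  next
    case False
    then obtain i0 where "\<beta> i0 > 0" by auto
    then have s: "\<beta> (selv \<beta>) > 0" unfolding selv_def by (rule someI)
    have "(\<Sum>i\<in>UNIV. if \<beta> i \<ge> 1 \<and> selv \<beta> = i then F \<beta> else 0) = (\<Sum>i\<in>UNIV. if selv \<beta> = i then F \<beta> else 0)"
      using s by (intro sum.cong) auto
    also have "\<dots> = F \<beta>" by simp
    finally show ?thesis using S False by (simp add: ps_add_def ps_const_def)
  qed
qed

locale pshom = vfield w for w :: "'f::field \<Rightarrow> int" +
  fixes \<iota> :: "('n::finite, 'k::comm_ring_1) mps \<Rightarrow> 'f"
  assumes hom_add: "\<And>f g. \<iota> (ps_add f g) = \<iota> f + \<iota> g"
    and hom_mult: "\<And>f g. \<iota> (ps_mult f g) = \<iota> f * \<iota> g"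
    and center: "\<And>f. f \<noteq> ps_zero \<Longrightarrow> w (\<iota> f) \<ge> 0 \<and> (w (\<iota> f) > 0 \<longleftrightarrow> f \<in> ps_max_ideal)"
    and trivial_on_k: "\<And>c. c \<noteq> 0 \<Longrightarrow> w (\<iota> (ps_const c)) = 0"
    and inj: "inj \<iota>"
begin

lemma iota_zero: "\<iota> ps_zero = 0"
proof -
  have "ps_add ps_zero ps_zero = (ps_zero :: ('n, 'k) mps)" by (auto simp: ps_add_def ps_zero_def)
  then have "\<iota> ps_zero + 0 = \<iota> ps_zero + \<iota> ps_zero" using hom_add by (metis add.right_neutral)
  then show ?thesis by (metis add_left_cancel)
qed

lemma iota_sum: "finite S \<Longrightarrow> \<iota> (\<lambda>\<beta>. \<Sum>i\<in>S. H i \<beta>) = (\<Sum>i\<in>S. \<iota> (H i))"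
proof (induction S rule: finite_induct)
  case empty
  have "(\<lambda>\<beta>. 0) = (ps_zero :: ('n, 'k) mps)" by (simp add: ps_zero_def)
  then show ?case using iota_zero by simp
next
  case (insert i S)
  have "(\<lambda>\<beta>. \<Sum>i\<in>insert i S. H i \<beta>) = ps_add (H i) (\<lambda>\<beta>. \<Sum>i\<in>S. H i \<beta>)"
    using insert by (auto simp: ps_add_def)
  then show ?case using insert hom_add by simp
qed

definition L0 :: "'f set" where "L0 = range (\<lambda>c. \<iota> (ps_const c))"

lemma iota_vge0: "vge w 0 (\<iota> F)"
  using center[of F] iota_zero by (cases "F = ps_zero") (auto simp: vge_def)

lemma xprops: "\<iota> (ps_X i) \<noteq> 0 \<and> w (\<iota> (ps_X i)) \<ge> 1"
proof -
  have nz: "ps_X i \<noteq> (ps_zero :: ('n, 'k) mps)"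
  proof
    assume "ps_X i = (ps_zero :: ('n, 'k) mps)"
    then have "ps_X i (unitv i) = (ps_zero :: ('n, 'k) mps) (unitv i)" by simp
    then show False by (simp add: ps_X_unitv ps_zero_def)
  qed
  have mi: "ps_X i \<in> (ps_max_ideal :: ('n, 'k) mps set)"
  proof -
    have "(\<lambda>_. 0) \<noteq> unitv i" by (metis unitv_def zero_neq_one)
    then show ?thesis by (simp add: ps_max_ideal_def ps_X_unitv)
  qed
  have A: "w (\<iota> (ps_X i)) \<ge> 1" using center[OF nz] mi by simp
  have B: "\<iota> (ps_X i) \<noteq> 0"
  proof
    assume "\<iota> (ps_X i) = 0"
    then have "w (\<iota> (ps_X i)) = w 0" by simp
    have "w (\<iota> (ps_X i)) > 0" using center[OF nz] mi by simp
    moreover have "\<iota> (ps_X i) = \<iota> ps_zero" using \<open>\<iota> (ps_X i) = 0\<close> iota_zero by simp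
    ultimately show False using inj nz by (meson injD)
  qed
  show ?thesis using A B by simp
qed

lemma approx:
  "\<exists>p. Aset w L0 (\<lambda>i. \<iota> (ps_X i)) 0 p \<and> vge w (int D) (\<iota> F - p)"
proof (induction D arbitrary: F)
  case 0
  show ?case using iota_vge0[of F] by (intro exI[of _ 0]) (simp add: Aset.A_zero)
next
  case (Suc D)
  let ?x = "\<lambda>i. \<iota> (ps_X i)"
  have "\<forall>i. \<exists>p. Aset w L0 ?x 0 p \<and> vge w (int D) (\<iota> (Gd F i) - p)" using Suc by blast
  then obtain pp where pp: "\<And>i. Aset w L0 ?x 0 (pp i) \<and> vge w (int D) (\<iota> (Gd F i) - pp i)"
    by metis
  have xne: "?x i \<noteq> 0" and xw: "w (?x i) \<ge> 1" for i using xprops[of i] by auto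
  define p where "p = \<iota> (ps_const (F (\<lambda>_. 0))) + (\<Sum>i\<in>UNIV. ?x i * pp i)"
  have "Aset w L0 ?x 0 p"
    unfolding p_def
  proof (rule Aset.A_add)
    show "Aset w L0 ?x 0 (\<iota> (ps_const (F (\<lambda>_. 0))))" by (rule Aset.A_L) (auto simp: L0_def)
    show "Aset w L0 ?x 0 (\<Sum>i\<in>UNIV. ?x i * pp i)"
    proof (rule Aset_sum)
      fix i
      have "0 \<le> w (?x i)" using xw[of i] by simp
      then have "Aset w L0 ?x 0 (?x i)" using xne by (intro Aset.A_var) auto
      then show "Aset w L0 ?x 0 (?x i * pp i)" using Aset.A_mult pp by fastforce
    qed
  qed
  moreover have "\<iota> F - p = (\<Sum>i\<in>UNIV. ?x i * (\<iota> (Gd F i) - pp i))"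
  proof -
    have "\<iota> F = \<iota> (ps_const (F (\<lambda>_. 0))) + (\<Sum>i\<in>UNIV. \<iota> (ps_mult (ps_X i) (Gd F i)))"
      by (subst decomp[of F]) (simp add: hom_add iota_sum)
    then show ?thesis by (simp add: p_def hom_mult algebra_simps sum_subtractf)
  qed
  moreover have "vge w (int (Suc D)) (\<Sum>i\<in>UNIV. ?x i * (\<iota> (Gd F i) - pp i))"
  proof (rule vge_sum)
    fix i
    have "vge w 1 (?x i)" using xw by (simp add: vge_def)
    from vge_mult[OF this conjunct2[OF pp[of i]]]
    show "vge w (int (Suc D)) (?x i * (\<iota> (Gd F i) - pp i))" by (simp add: add.commute)
  qed
  ultimately show ?case by auto
qed

end


theorem theorem3:
  fixes \<iota> :: "(('n::finite \<Rightarrow> nat) \<Rightarrow> 'k::field_char_0) \<Rightarrow> 'f::field"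
    and w :: "'f \<Rightarrow> int"
  assumes n2: "CARD('n) \<ge> 2"
    and inj: "inj \<iota>"
    and hom_add: "\<And>f g. \<iota> (ps_add f g) = \<iota> f + \<iota> g"
    and hom_mult: "\<And>f g. \<iota> (ps_mult f g) = \<iota> f * \<iota> g"
    and hom_one: "\<iota> (ps_const 1) = 1"
    and val: "valuation w"
    and trivial_on_k: "\<And>c. c \<noteq> 0 \<Longrightarrow> w (\<iota> (ps_const c)) = 0"
    and center: "\<And>f. f \<noteq> ps_zero \<Longrightarrow> w (\<iota> f) \<ge> 0 \<and> (w (\<iota> f) > 0 \<longleftrightarrow> f \<in> ps_max_ideal)"
    and value_group: "{w (\<iota> f) - w (\<iota> g) | f g. f \<noteq> ps_zero \<and> g \<noteq> ps_zero} = UNIV"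
    and complete: "val_complete w"
    and dense: "val_dense w (frac_image \<iota>)"
  shows "\<exists>Y. (transf_step \<iota> w)\<^sup>*\<^sup>* (\<lambda>i. \<iota> (ps_X i)) Y \<and> (\<exists>i. Y i \<noteq> 0 \<and> w (Y i) = 1)"
proof -
  interpret V: vfield w by (rule vfield.intro[OF val])
  interpret P: pshom w \<iota>
    by (rule pshom.intro[OF vfield.intro[OF val]], rule pshom_axioms.intro)
      (use hom_add hom_mult center trivial_on_k inj in auto)
  have z: "\<iota> ps_zero = 0" by (rule P.iota_zero)
  have c0: "\<iota> (ps_const 0) = 0" using z by (simp add: ps_const_0)
  have cadd: "\<iota> (ps_const a) + \<iota> (ps_const b) = \<iota> (ps_const (a + b))" for a b
    using hom_add[of "ps_const a" "ps_const b"] by (simp add: ps_add_const)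
  have cmult: "\<iota> (ps_const a) * \<iota> (ps_const b) = \<iota> (ps_const (a * b))" for a b
    using hom_mult[of "ps_const a" "ps_const b"] by (simp add: ps_mult_const)
  have cnat: "\<iota> (ps_const (of_nat n)) = of_nat n" for n
  proof (induction n)
    case 0 then show ?case using c0 by simp
  next
    case (Suc n)
    have "\<iota> (ps_const (of_nat (Suc n))) = \<iota> (ps_const 1) + \<iota> (ps_const (of_nat n))"
      using cadd[of 1 "of_nat n"] by simp
    then show ?case using Suc hom_one by simp
  qed
  have char: "of_nat n \<noteq> (0::'f)" if "n > 0" for n
  proof
    assume "of_nat n = (0::'f)"
    then have "\<iota> (ps_const (of_nat n :: 'k)) = \<iota> ps_zero" using cnat z by simp
    then have e: "(ps_const (of_nat n :: 'k) :: ('n, 'k) mps) = ps_zero" using inj by (meson injD)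
    have "(ps_const (of_nat n :: 'k) :: ('n, 'k) mps) (\<lambda>_. 0) = of_nat n" by (simp add: ps_const_def)
    moreover have "(ps_zero :: ('n, 'k) mps) (\<lambda>_. 0) = 0" by (simp add: ps_zero_def)
    ultimately have "(of_nat n :: 'k) = 0" using e by metis
    then show False using that by simp
  qed
  have cneg: "- \<iota> (ps_const a) = \<iota> (ps_const (- a))" for a
  proof -
    have "\<iota> (ps_const a) + \<iota> (ps_const (- a)) = 0" using cadd[of a "-a"] c0 by simp
    then show ?thesis by (rule minus_unique)
  qed
  have L0: "coeff_subfield \<iota> w P.L0"
    unfolding coeff_subfield_def P.L0_def
  proof (intro conjI ballI impI)
    show "0 \<in> range (\<lambda>c. \<iota> (ps_const c))" using c0 by (metis rangeI)
    show "1 \<in> range (\<lambda>c. \<iota> (ps_const c))" using hom_one by (metis rangeI)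
    fix x assume "x \<in> range (\<lambda>c. \<iota> (ps_const c))"
    then obtain a where a: "x = \<iota> (ps_const a)" by blast
    {
      fix y assume "y \<in> range (\<lambda>c. \<iota> (ps_const c))"
      then obtain b where b: "y = \<iota> (ps_const b)" by blast
      show "x + y \<in> range (\<lambda>c. \<iota> (ps_const c))" using a b cadd by (metis rangeI)
      show "x * y \<in> range (\<lambda>c. \<iota> (ps_const c))" using a b cmult by (metis rangeI)
    }
    show "- x \<in> range (\<lambda>c. \<iota> (ps_const c))" using a cneg by (metis rangeI)
    {
      assume "x \<noteq> 0"
      then have "a \<noteq> 0" using a c0 by auto
      then have "\<iota> (ps_const a) * \<iota> (ps_const (inverse a)) = 1" using cmult hom_one by simp
      then have "inverse x = \<iota> (ps_const (inverse a))" using a by (metis inverse_unique)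
      then show "inverse x \<in> range (\<lambda>c. \<iota> (ps_const c))" by simp
    }
  next
    show "range (\<lambda>c. \<iota> (ps_const c)) \<subseteq> range (\<lambda>c. \<iota> (ps_const c))" by simp
    show "range (\<lambda>c. \<iota> (ps_const c)) \<subseteq> val_ring w"
    proof
      fix x assume "x \<in> range (\<lambda>c. \<iota> (ps_const c))"
      then obtain a where a: "x = \<iota> (ps_const a)" by blast
      show "x \<in> val_ring w"
        using a c0 trivial_on_k[of a] by (cases "a = 0") (auto simp: val_ring_def)
    qed
  qed
  have "(1::int) \<in> UNIV" by (rule UNIV_I)
  then have "(1::int) \<in> {w (\<iota> f) - w (\<iota> g) | f g. f \<noteq> ps_zero \<and> g \<noteq> ps_zero}"
    by (subst value_group)
  then obtain F G where FG: "F \<noteq> ps_zero" "G \<noteq> ps_zero" "w (\<iota> F) - w (\<iota> G) = 1"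
    unfolding mem_Collect_eq by metis
  have good: "\<exists>p. Aset w P.L0 (\<lambda>i. \<iota> (ps_X i)) 0 p \<and> p \<noteq> 0 \<and> w p = w (\<iota> H)" if H: "H \<noteq> ps_zero" for H
  proof -
    have Hnz: "\<iota> H \<noteq> 0" using H inj z by (metis injD)
    have H0: "w (\<iota> H) \<ge> 0" using center[OF H] by simp
    obtain p where p: "Aset w P.L0 (\<lambda>i. \<iota> (ps_X i)) 0 p" "vge w (int (Suc (nat (w (\<iota> H))))) (\<iota> H - p)"
      using P.approx by blast
    have "vge w (w (\<iota> H) + 1) (\<iota> H - p)" using p(2) H0 by (simp add: add.commute)
    from V.vge_close[OF Hnz this] p(1) show ?thesis by blast
  qed
  obtain p where p: "Aset w P.L0 (\<lambda>i. \<iota> (ps_X i)) 0 p" "p \<noteq> 0" "w p = w (\<iota> F)" using good[OF FG(1)] by blast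
  obtain q where q: "Aset w P.L0 (\<lambda>i. \<iota> (ps_X i)) 0 q" "q \<noteq> 0" "w q = w (\<iota> G)" using good[OF FG(2)] by blast
  have pq: "w p = w q + 1" using p(3) q(3) FG(3) by simp
  have wts: "\<forall>j. \<iota> (ps_X j) \<noteq> 0 \<longrightarrow> w (\<iota> (ps_X j)) \<ge> 1" using P.xprops by blast
  have x0: "(\<lambda>i. \<iota> (ps_X i)) i1 \<noteq> 0" for i1 using P.xprops by blast
  show ?thesis
    using V.main_loop[OF complete char p(2) q(2) pq refl L0 wts x0 p(1) q(1)] by blast
qed


end
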